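(* Let $f$ satisfy Hypothesis 1 or Hypothesis 2 (see context), let $\eta\in(0,1]$ and let $(\rho_1,\rho_2)$ be a classical solution of the viscous system (see context), $\sigma=\rho_1+\rho_2$. Then there exist $\mathcal{K}_5>0$ and $\theta_\alpha>1$, whose sizes depend only on $\alpha,\kappa,|\Omega|,T$ and the Lipschitz constants of $V_1,V_2$, such that \[ \|\partial_x\sigma\|_{L^{\theta_\alpha}([0,T]\times\Omega)}\le\mathcal{K}_5. \]
   Context: $\Omega=(0,L)$, $T>0$. Hypothesis 1: (H1) $f(s)=\frac{\lambda}{\alpha-1}s^\alpha$, $\alpha\in(0,1)$, $\lambda>0$; or (H2) $f(s)=\lambda s\log s$, $\lambda>0$. Hypothesis 2: (I1) $f\in C^{4,\beta}_{loc}(0,\infty)$, $f''>0$; (I2) $\frac{1}{\alpha\kappa}s^\alpha\le s^2f''(s)$ for $s>0$, $\alpha\in(0,1)$, $\kappa>0$; (I3) $|sf'''(s)/f''(s)|\le\kappa$; (I4) $\int_\Omega f(\mu)\,dx>-\mathcal{K}_{\inf}$ for all $\mu\in\mathscr{P}^{ac}(\Omega)$. Under Hypothesis 1, $\alpha,\kappa$ denote the corresponding constants determined by $f$. Viscous system, for $i\in\{1,2\}$: $\partial_t\rho_i=\eta\partial_{xx}\rho_i+\partial_x(\rho_i\partial_x(f'(\rho_1+\rho_2)+V_i))$ in $(0,T)\times\Omega$, $\rho_i(0)=\rho_{i,0}$, $\eta\partial_x\rho_i+\rho_i\partial_x(f'(\rho_1+\rho_2)+V_i)=0$ on $(0,T)\times\partial\Omega$.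 Standing assumptions: $V_1,V_2\in C^{3,1}(\overline\Omega)$, $\partial_xV_1=\partial_xV_2=0$ on $\partial\Omega$; $\rho_{i,0}\in C^{3,1}(\overline\Omega)$ probability densities, $\rho_{1,0}+\rho_{2,0}>0$, satisfying the zeroth- and first-order boundary compatibility conditions. A classical solution: $\rho_i\in C([0,T];C^3(\overline\Omega))\cap C^1([0,T];C^1(\overline\Omega))$ solving the system pointwise, with $\rho_1+\rho_2>0$. *)

theory Defs
  imports "HOL-Analysis.Analysis"
begin

text \<open>Omega = (0,L). One-sided (within the closed interval) derivatives.\<close>

definition dxL :: "real \<Rightarrow> (real \<Rightarrow> real) \<Rightarrow> real \<Rightarrow> real" where
  "dxL L g x = vector_derivative g (at x within {0..L})"

definition dtT :: "real \<Rightarrow> (real \<Rightarrow> real \<Rightarrow> real) \<Rightarrow> real \<Rightarrow> real \<Rightarrow> real" where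
  "dtT T u t x = vector_derivative (\<lambda>s. u s x) (at t within {0..T})"

definition C31_on :: "real \<Rightarrow> (real \<Rightarrow> real) \<Rightarrow> bool" where
  "C31_on L g \<longleftrightarrow>
     (\<forall>j<3. \<forall>x\<in>{0..L}. ((dxL L ^^ j) g) differentiable (at x within {0..L})) \<and>
     (\<exists>M. M-lipschitz_on {0..L} ((dxL L ^^ 3) g))"

definition lip_const :: "real \<Rightarrow> (real \<Rightarrow> real) \<Rightarrow> real" where
  "lip_const L V = Sup ((\<lambda>(x,y). \<bar>V x - V y\<bar> / \<bar>x - y\<bar>) `
                        {(x,y). x \<in> {0..L} \<and> y \<in> {0..L} \<and> x \<noteq> y})"

definition potential_ok :: "real \<Rightarrow> (real \<Rightarrow> real) \<Rightarrow> bool" where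
  "potential_ok L V \<longleftrightarrow> C31_on L V \<and> dxL L V 0 = 0 \<and> dxL L V L = 0"

definition hyp1 :: "(real \<Rightarrow> real) \<Rightarrow> real \<Rightarrow> real \<Rightarrow> bool" where
  "hyp1 f \<alpha> \<kappa> \<longleftrightarrow> 0 < \<alpha> \<and> \<alpha> < 1 \<and> 0 < \<kappa> \<and>
     ((\<exists>lam>0. (\<forall>s>0. f s = lam / (\<alpha> - 1) * s powr \<alpha>) \<and>
         (\<forall>s>0. s powr \<alpha> / (\<alpha> * \<kappa>) \<le> s\<^sup>2 * (deriv ^^ 2) f s) \<and>
         (\<forall>s>0. \<bar>s * (deriv ^^ 3) f s / (deriv ^^ 2) f s\<bar> \<le> \<kappa>))
      \<or>
      (\<exists>lam>0. (\<forall>s>0. f s = lam * s * ln s) \<and>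
         (\<forall>s>0. s / \<kappa> \<le> s\<^sup>2 * (deriv ^^ 2) f s) \<and>
         (\<forall>s>0. \<bar>s * (deriv ^^ 3) f s / (deriv ^^ 2) f s\<bar> \<le> \<kappa>)))"

definition hyp2 :: "real \<Rightarrow> (real \<Rightarrow> real) \<Rightarrow> real \<Rightarrow> real \<Rightarrow> bool" where
  "hyp2 L f \<alpha> \<kappa> \<longleftrightarrow> 0 < \<alpha> \<and> \<alpha> < 1 \<and> 0 < \<kappa> \<and>
     \<comment> \<open>(I1) f in C^{4,beta}_loc(0,inf), f'' > 0\<close>
     (\<forall>k<4. \<forall>s>0. ((deriv ^^ k) f) differentiable (at s)) \<and>
     (\<exists>\<beta>. 0 < \<beta> \<and> \<beta> \<le> 1 \<and>
        (\<forall>a b. 0 < a \<longrightarrow> a \<le> b \<longrightarrow> (\<exists>C. \<forall>x\<in>{a..b}. \<forall>y\<in>{a..b}.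
            \<bar>(deriv ^^ 4) f x - (deriv ^^ 4) f y\<bar> \<le> C * \<bar>x - y\<bar> powr \<beta>))) \<and>
     (\<forall>s>0. (deriv ^^ 2) f s > 0) \<and>
     \<comment> \<open>(I2)\<close>
     (\<forall>s>0. s powr \<alpha> / (\<alpha> * \<kappa>) \<le> s\<^sup>2 * (deriv ^^ 2) f s) \<and>
     \<comment> \<open>(I3)\<close>
     (\<forall>s>0. \<bar>s * (deriv ^^ 3) f s / (deriv ^^ 2) f s\<bar> \<le> \<kappa>) \<and>
     \<comment> \<open>(I4)\<close>
     (\<exists>Kinf. \<forall>\<mu>. (\<forall>x\<in>{0..L}. 0 \<le> \<mu> x) \<and> set_integrable lborel {0..L} \<mu> \<and>
         (LINT x:{0..L}|lborel. \<mu> x) = 1 \<longrightarrow>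
         (LINT x:{0..L}|lborel. f (\<mu> x)) > - Kinf)"

definition flux :: "real \<Rightarrow> (real \<Rightarrow> real) \<Rightarrow> real \<Rightarrow> (real \<Rightarrow> real) \<Rightarrow>
                    (real \<Rightarrow> real) \<Rightarrow> (real \<Rightarrow> real) \<Rightarrow> real \<Rightarrow> real" where
  "flux L f \<eta> V r s x = \<eta> * dxL L r x + r x * dxL L (\<lambda>y. deriv f (s y) + V y) x"

definition init_ok :: "real \<Rightarrow> (real \<Rightarrow> real) \<Rightarrow> bool" where
  "init_ok L r \<longleftrightarrow> C31_on L r \<and> (\<forall>x\<in>{0..L}. 0 \<le> r x) \<and>
     (LINT x:{0..L}|lborel. r x) = 1"

text \<open>Zeroth- and first-order boundary compatibility conditions for the initial data.
  R_i = d_x(flux_i) is the initial time derivative; the first-order condition is the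
  vanishing at the boundary of the time derivative of the flux at t = 0.\<close>
definition compat :: "real \<Rightarrow> (real \<Rightarrow> real) \<Rightarrow> real \<Rightarrow> (real \<Rightarrow> real) \<Rightarrow> (real \<Rightarrow> real)
                      \<Rightarrow> (real \<Rightarrow> real) \<Rightarrow> (real \<Rightarrow> real) \<Rightarrow> bool" where
  "compat L f \<eta> V1 V2 r1 r2 \<longleftrightarrow>
    (let s = (\<lambda>x. r1 x + r2 x);
         R1 = dxL L (flux L f \<eta> V1 r1 s);
         R2 = dxL L (flux L f \<eta> V2 r2 s);
         Rs = (\<lambda>x. R1 x + R2 x);
         G = (\<lambda>V r R x. \<eta> * dxL L R x + R x * dxL L (\<lambda>y. deriv f (s y) + V y) x
                      + r x * dxL L (\<lambda>y. (deriv ^^ 2) f (s y) * Rs y) x)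
     in flux L f \<eta> V1 r1 s 0 = 0 \<and> flux L f \<eta> V1 r1 s L = 0 \<and>
        flux L f \<eta> V2 r2 s 0 = 0 \<and> flux L f \<eta> V2 r2 s L = 0 \<and>
        G V1 r1 R1 0 = 0 \<and> G V1 r1 R1 L = 0 \<and> G V2 r2 R2 0 = 0 \<and> G V2 r2 R2 L = 0)"

text \<open>Regularity C([0,T];C^3([0,L])) \<inter> C^1([0,T];C^1([0,L])).\<close>
definition sol_regular :: "real \<Rightarrow> real \<Rightarrow> (real \<Rightarrow> real \<Rightarrow> real) \<Rightarrow> bool" where
  "sol_regular L T u \<longleftrightarrow>
     (\<forall>t\<in>{0..T}. \<forall>j<3. \<forall>x\<in>{0..L}. ((dxL L ^^ j) (u t)) differentiable (at x within {0..L})) \<and>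
     (\<forall>j\<le>3. continuous_on ({0..T} \<times> {0..L}) (\<lambda>(t,x). (dxL L ^^ j) (u t) x)) \<and>
     (\<forall>x\<in>{0..L}. \<forall>t\<in>{0..T}. (\<lambda>s. u s x) differentiable (at t within {0..T})) \<and>
     (\<forall>t\<in>{0..T}. \<forall>x\<in>{0..L}. (dtT T u t) differentiable (at x within {0..L})) \<and>
     continuous_on ({0..T} \<times> {0..L}) (\<lambda>(t,x). dtT T u t x) \<and>
     continuous_on ({0..T} \<times> {0..L}) (\<lambda>(t,x). dxL L (dtT T u t) x)"

definition classical_solution :: "real \<Rightarrow> real \<Rightarrow> (real \<Rightarrow> real) \<Rightarrow> real \<Rightarrow>
    (real \<Rightarrow> real) \<Rightarrow> (real \<Rightarrow> real) \<Rightarrow> (real \<Rightarrow> real) \<Rightarrow> (real \<Rightarrow> real) \<Rightarrow>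
    (real \<Rightarrow> real \<Rightarrow> real) \<Rightarrow> (real \<Rightarrow> real \<Rightarrow> real) \<Rightarrow> bool" where
  "classical_solution L T f \<eta> V1 V2 r10 r20 \<rho>1 \<rho>2 \<longleftrightarrow>
    (let \<sigma> = (\<lambda>t x. \<rho>1 t x + \<rho>2 t x);
         J1 = (\<lambda>t. flux L f \<eta> V1 (\<rho>1 t) (\<sigma> t));
         J2 = (\<lambda>t. flux L f \<eta> V2 (\<rho>2 t) (\<sigma> t))
     in sol_regular L T \<rho>1 \<and> sol_regular L T \<rho>2 \<and>
        (\<forall>t\<in>{0..T}. \<forall>x\<in>{0..L}. 0 < \<sigma> t x) \<and>
        (\<forall>x\<in>{0..L}. \<rho>1 0 x = r10 x \<and> \<rho>2 0 x = r20 x) \<and>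
        (\<forall>t\<in>{0<..<T}. \<forall>x\<in>{0<..<L}.
            J1 t differentiable (at x) \<and> dtT T \<rho>1 t x = dxL L (J1 t) x \<and>
            J2 t differentiable (at x) \<and> dtT T \<rho>2 t x = dxL L (J2 t) x) \<and>
        (\<forall>t\<in>{0<..<T}. J1 t 0 = 0 \<and> J1 t L = 0 \<and> J2 t 0 = 0 \<and> J2 t L = 0))"

end

theory Submission
  imports Defs
begin

lemma cont_slice:
  assumes "continuous_on (A \<times> B) (\<lambda>(t,x). h t x)" "t \<in> A"
  shows "continuous_on B (h t)"
proof -
  have "continuous_on B (\<lambda>x. (\<lambda>(t,x). h t x) (t, x))"
    by (rule continuous_on_compose2[OF assms(1)]) (auto intro!: continuous_intros simp: assms(2))
  then show ?thesis by simp
qed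

lemma cont_slice2:
  assumes "continuous_on (A \<times> B) (\<lambda>(t,x). h t x)" "x \<in> B"
  shows "continuous_on A (\<lambda>t. h t x)"
proof -
  have "continuous_on A (\<lambda>t. (\<lambda>(t,x). h t x) (t, x))"
    by (rule continuous_on_compose2[OF assms(1)]) (auto intro!: continuous_intros simp: assms(2))
  then show ?thesis by simp
qed

lemma cont_comp2:
  assumes "continuous_on S g" "continuous_on (A \<times> B) (\<lambda>(t,x). h t x)"
    "\<And>t x. t \<in> A \<Longrightarrow> x \<in> B \<Longrightarrow> h t x \<in> S"
  shows "continuous_on (A \<times> B) (\<lambda>(t,x). g (h t x))"
proof -
  have "continuous_on (A \<times> B) (\<lambda>z. g ((\<lambda>(t,x). h t x) z))"
    by (rule continuous_on_compose2[OF assms(1) assms(2)]) (auto simp: assms(3))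
  then show ?thesis by (simp add: case_prod_beta)
qed

lemma cont_add2:
  fixes f g :: "real \<Rightarrow> real \<Rightarrow> real"
  assumes "continuous_on X (\<lambda>(t,x). f t x)" "continuous_on X (\<lambda>(t,x). g t x)"
  shows "continuous_on X (\<lambda>(t,x). f t x + g t x)"
  using continuous_on_add[OF assms(1) assms(2)] by (simp add: case_prod_beta)

lemma cont_mult2:
  fixes f g :: "real \<Rightarrow> real \<Rightarrow> real"
  assumes "continuous_on X (\<lambda>(t,x). f t x)" "continuous_on X (\<lambda>(t,x). g t x)"
  shows "continuous_on X (\<lambda>(t,x). f t x * g t x)"
  using continuous_on_mult[OF assms(1) assms(2)] by (simp add: case_prod_beta)

lemma deriv_cont_on:
  assumes "open S" "\<And>y. y \<in> S \<Longrightarrow> (g has_real_derivative g' y) (at y)"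
  shows "continuous_on S g"
  using assms by (meson DERIV_isCont continuous_at_imp_continuous_on)

lemma dxL_hasd:
  assumes "0 < L" "x \<in> {0..L}" "g differentiable (at x within {0..L})"
  shows "(g has_real_derivative dxL L g x) (at x within {0..L})"
  using assms by (simp add: dxL_def has_real_derivative_iff_has_vector_derivative vector_derivative_works)

lemma dxL_eq:
  assumes "0 < L" "x \<in> {0..L}" "(g has_real_derivative g') (at x within {0..L})"
  shows "dxL L g x = g'"
  using assms vector_derivative_within_closed_interval
  by (simp add: dxL_def has_real_derivative_iff_has_vector_derivative)

lemma dtT_hasd:
  assumes "0 < T" "t \<in> {0..T}" "(\<lambda>s. u s x) differentiable (at t within {0..T})"
  shows "((\<lambda>s. u s x) has_real_derivative dtT T u t x) (at t within {0..T})"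
  using assms by (simp add: dtT_def has_real_derivative_iff_has_vector_derivative vector_derivative_works)

lemma within_int:
  assumes "(g has_real_derivative g') (at x within {a..b})" "x \<in> {a<..<b}"
  shows "(g has_real_derivative g') (at x)"
proof -
  have "x \<in> interior {a..b}" using assms(2) by simp
  then have "at x within {a..b} = at x" by (rule at_within_interior)
  then show ?thesis using assms(1) by simp
qed

lemma dxL_at:
  assumes "x \<in> {0<..<L}" "g differentiable (at x)"
  shows "(g has_real_derivative dxL L g x) (at x)"
proof -
  have "x \<in> interior {0..L}" using assms(1) by simp
  then have e: "at x within {0..L} = at x" by (rule at_within_interior)
  have "(g has_vector_derivative vector_derivative g (at x)) (at x)"
    using assms(2) vector_derivative_works by blast
  then show ?thesis unfolding dxL_def e by (simp add: has_real_derivative_iff_has_vector_derivative)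
qed


locale fluxsys =
  fixes L T :: real and u ux ut J :: "real \<Rightarrow> real \<Rightarrow> real" and S :: "real set"
    and \<Phi> \<Phi>1 \<Phi>2 :: "real \<Rightarrow> real"
  assumes L: "0 < L" and T: "0 < T"
  and cu: "continuous_on ({0..T}\<times>{0..L}) (\<lambda>(t,x). u t x)"
  and cux: "continuous_on ({0..T}\<times>{0..L}) (\<lambda>(t,x). ux t x)"
  and cut: "continuous_on ({0..T}\<times>{0..L}) (\<lambda>(t,x). ut t x)"
  and cJ: "continuous_on ({0..T}\<times>{0..L}) (\<lambda>(t,x). J t x)"
  and dux: "\<And>t x. t \<in> {0..T} \<Longrightarrow> x \<in> {0..L} \<Longrightarrow> (u t has_real_derivative ux t x) (at x within {0..L})"
  and dut: "\<And>t x. t \<in> {0..T} \<Longrightarrow> x \<in> {0..L} \<Longrightarrow> ((\<lambda>s. u s x) has_real_derivative ut t x) (at t within {0..T})"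
  and dJ: "\<And>t x. t \<in> {0<..<T} \<Longrightarrow> x \<in> {0<..<L} \<Longrightarrow> (J t has_real_derivative ut t x) (at x)"
  and Jb: "\<And>t. t \<in> {0<..<T} \<Longrightarrow> J t 0 = 0 \<and> J t L = 0"
  and oS: "open S" and uS: "\<And>t x. t \<in> {0..T} \<Longrightarrow> x \<in> {0..L} \<Longrightarrow> u t x \<in> S"
  and dP: "\<And>y. y \<in> S \<Longrightarrow> (\<Phi> has_real_derivative \<Phi>1 y) (at y)"
  and dP1: "\<And>y. y \<in> S \<Longrightarrow> (\<Phi>1 has_real_derivative \<Phi>2 y) (at y)"
  and cP2: "continuous_on S \<Phi>2"
begin

definition F where "F t = integral {0..L} (\<lambda>x. \<Phi> (u t x))"
definition G where "G t = integral {0..L} (\<lambda>x. \<Phi>2 (u t x) * ux t x * J t x)"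

lemma cP: "continuous_on S \<Phi>" using deriv_cont_on[OF oS dP] .
lemma cP1: "continuous_on S \<Phi>1" using deriv_cont_on[OF oS dP1] .

lemma cPu: "continuous_on ({0..T}\<times>{0..L}) (\<lambda>(t,x). \<Phi> (u t x))"
  using cont_comp2[OF cP cu uS] .
lemma cP1u: "continuous_on ({0..T}\<times>{0..L}) (\<lambda>(t,x). \<Phi>1 (u t x))"
  using cont_comp2[OF cP1 cu uS] .
lemma cP2u: "continuous_on ({0..T}\<times>{0..L}) (\<lambda>(t,x). \<Phi>2 (u t x))"
  using cont_comp2[OF cP2 cu uS] .

lemma cg: "continuous_on ({0..T}\<times>{0..L}) (\<lambda>(t,x). \<Phi>2 (u t x) * ux t x * J t x)"
  by (intro cont_mult2 cP2u cux cJ)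

lemma cF: "continuous_on {0..T} F"
proof -
  have "continuous_on {0..T} (\<lambda>t. integral (cbox 0 L) (\<lambda>x. \<Phi> (u t x)))"
    by (rule integral_continuous_on_param) (use cPu in \<open>simp add: box_real\<close>)
  then show ?thesis unfolding F_def by (simp add: box_real)
qed

lemma cG: "continuous_on {0..T} G"
proof -
  have "continuous_on {0..T} (\<lambda>t. integral (cbox 0 L) (\<lambda>x. \<Phi>2 (u t x) * ux t x * J t x))"
    by (rule integral_continuous_on_param) (use cg in \<open>simp add: box_real\<close>)
  then show ?thesis unfolding G_def by (simp add: box_real)
qed

lemma dF: assumes t: "t \<in> {0<..<T}" shows "(F has_real_derivative - G t) (at t)"
proof -
  have t': "t \<in> {0..T}" using t by auto
  have c1: "continuous_on ({0..T}\<times>{0..L}) (\<lambda>(t,x). \<Phi>1 (u t x) * ut t x)"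
    by (intro cont_mult2 cP1u cut)
  have lb: "((\<lambda>t. integral (cbox 0 L) (\<lambda>x. \<Phi> (u t x))) has_real_derivative
      integral (cbox 0 L) (\<lambda>x. \<Phi>1 (u t x) * ut t x)) (at t within {0..T})"
  proof (rule leibniz_rule_field_derivative)
    fix s x assume s: "s \<in> {0..T}" and x: "x \<in> cbox 0 L"
    show "((\<lambda>s. \<Phi> (u s x)) has_real_derivative \<Phi>1 (u s x) * ut s x) (at s within {0..T})"
      using DERIV_chain2[OF dP[OF uS] dut] s x by (simp add: box_real)
  next
    fix s assume s: "s \<in> {0..T}"
    show "(\<lambda>x. \<Phi> (u s x)) integrable_on cbox 0 L"
      using integrable_continuous_real[OF cont_slice[OF cPu s]] by (simp add: box_real)
  next
    show "continuous_on ({0..T} \<times> cbox 0 L) (\<lambda>(s, x). \<Phi>1 (u s x) * ut s x)"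
      using c1 by (simp add: box_real)
  qed (use t' in auto)
  then have lb': "(F has_real_derivative integral {0..L} (\<lambda>x. \<Phi>1 (u t x) * ut t x)) (at t)"
    using within_int[of F _ t 0 T] t unfolding F_def by (simp add: box_real)
  define w where "w x = \<Phi>1 (u t x) * J t x" for x
  have cw: "continuous_on {0..L} w"
    unfolding w_def by (intro continuous_on_mult cont_slice[OF cP1u t'] cont_slice[OF cJ t'])
  have dw: "(w has_vector_derivative (\<Phi>2 (u t x) * ux t x * J t x + \<Phi>1 (u t x) * ut t x)) (at x)"
    if x: "x \<in> {0<..<L}" for x
  proof -
    have x': "x \<in> {0..L}" using x by auto
    have d1: "((\<lambda>x. \<Phi>1 (u t x)) has_real_derivative \<Phi>2 (u t x) * ux t x) (at x)"
      using DERIV_chain2[OF dP1[OF uS[OF t' x']] within_int[OF dux[OF t' x'] x]] .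
    have "(w has_real_derivative (\<Phi>2 (u t x) * ux t x) * J t x + ut t x * \<Phi>1 (u t x)) (at x)"
      unfolding w_def using DERIV_mult[OF d1 dJ[OF t x]] .
    then show ?thesis
      by (simp add: has_real_derivative_iff_has_vector_derivative[symmetric] algebra_simps)
  qed
  have hi: "((\<lambda>x. \<Phi>2 (u t x) * ux t x * J t x + \<Phi>1 (u t x) * ut t x) has_integral (w L - w 0)) {0..L}"
    by (rule fundamental_theorem_of_calculus_interior[OF _ cw dw]) (use L in auto)
  have w0: "w L - w 0 = 0" unfolding w_def using Jb[OF t] by simp
  have i1: "(\<lambda>x. \<Phi>2 (u t x) * ux t x * J t x) integrable_on {0..L}"
    by (rule integrable_continuous_real) (rule cont_slice[OF cg t', simplified])
  have "((\<lambda>x. \<Phi>1 (u t x) * ut t x) has_integral (0 - G t)) {0..L}"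
    using has_integral_diff[OF hi[unfolded w0] integrable_integral[OF i1]] unfolding G_def by simp
  then have "integral {0..L} (\<lambda>x. \<Phi>1 (u t x) * ut t x) = - G t" by (simp add: integral_unique)
  then show ?thesis using lb' by simp
qed

lemma FTC_sub:
  assumes "0 \<le> a" "a \<le> b" "b \<le> T"
  shows "((\<lambda>t. - G t) has_integral F b - F a) {a..b}"
proof (rule fundamental_theorem_of_calculus_interior[OF assms(2)])
  show "continuous_on {a..b} F" using continuous_on_subset[OF cF] assms by auto
  fix t assume "t \<in> {a<..<b}"
  then have "t \<in> {0<..<T}" using assms by auto
  then show "(F has_vector_derivative - G t) (at t)"
    using dF by (simp add: has_real_derivative_iff_has_vector_derivative[symmetric])
qed

lemma intR: "integral ({0..T}\<times>{0..L}) (\<lambda>(t,x). \<Phi>2 (u t x) * ux t x * J t x) = F 0 - F T"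
proof -
  have "integral (cbox (0,0) (T,L)) (\<lambda>(t,x). \<Phi>2 (u t x) * ux t x * J t x)
      = integral (cbox 0 T) (\<lambda>t. integral (cbox 0 L) (\<lambda>x. (\<lambda>(t,x). \<Phi>2 (u t x) * ux t x * J t x) (t, x)))"
    by (rule integral_prod_continuous) (use cg in \<open>simp add: cbox_Pair_eq box_real\<close>)
  also have "\<dots> = integral {0..T} G" unfolding G_def by (simp add: box_real)
  also have "\<dots> = F 0 - F T"
  proof -
    have h: "((\<lambda>t. - G t) has_integral F T - F 0) {0..T}" using FTC_sub[of 0 T] T by auto
    have "(G has_integral F 0 - F T) {0..T}" using has_integral_neg[OF h] by simp
    then show ?thesis by (simp add: integral_unique)
  qed
  finally show ?thesis by (simp add: cbox_Pair_eq box_real)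
qed

end


lemma pw1:
  fixes s v a b \<kappa> :: real
  assumes s: "0 < s" and v: "0 < v" and lb: "min (s powr a) s / \<kappa> \<le> s\<^sup>2 * v"
    and a: "0 < a" "a < 1" and k: "0 < \<kappa>" and ab: "a \<le> b" "b < 1"
  shows "1 \<le> \<kappa> * (s powr (b-1) * v) * (1+s) powr (3-a-b)"
proof -
  have e1: "s powr (b-1) = s powr (b-3) * s\<^sup>2"
  proof -
    have "s powr (b-1) = s powr ((b-3) + 2)" by simp
    also have "\<dots> = s powr (b-3) * s powr 2" by (rule powr_add)
    also have "s powr 2 = s\<^sup>2" using s by simp
    finally show ?thesis .
  qed
  have m: "min (s powr a) s \<le> \<kappa> * (s\<^sup>2 * v)" using lb k by (simp add: divide_le_eq mult.commute)
  have "s powr (b-3) * min (s powr a) s \<le> s powr (b-3) * (\<kappa> * (s\<^sup>2 * v))"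
    by (rule mult_left_mono[OF m]) simp
  also have "\<dots> = \<kappa> * (s powr (b-1) * v)" using e1 by simp
  finally have A: "s powr (b-3) * min (s powr a) s \<le> \<kappa> * (s powr (b-1) * v)" .
  have c0: "0 \<le> 3 - a - b" using a ab by simp
  have B: "1 \<le> s powr (b-3) * min (s powr a) s * (1+s) powr (3-a-b)"
  proof (cases "1 \<le> s")
    case True
    have "s powr a \<le> s powr 1" by (rule powr_mono) (use a True in auto)
    then have mn: "min (s powr a) s = s powr a" using s by simp
    have "s powr (3-a-b) \<le> (1+s) powr (3-a-b)" by (rule powr_mono2) (use c0 s in auto)
    then have "s powr (b-3) * s powr a * s powr (3-a-b) \<le> s powr (b-3) * s powr a * (1+s) powr (3-a-b)"
      by (intro mult_left_mono) auto
    moreover have "s powr (b-3) * s powr a * s powr (3-a-b) = 1"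
      using s by (simp add: powr_add[symmetric])
    ultimately show ?thesis using mn by simp
  next
    case False
    have "s powr 1 \<le> s powr a" by (rule powr_mono') (use a False s in auto)
    then have mn: "min (s powr a) s = s" using s by simp
    have "s powr 0 \<le> s powr (b-2)" by (rule powr_mono') (use ab False s in auto)
    then have h1: "1 \<le> s powr (b-2)" using s by simp
    have h2: "1 \<le> (1+s) powr (3-a-b)" by (rule ge_one_powr_ge_zero) (use s c0 in auto)
    have "s powr (b-3) * s = s powr (b-3) * s powr 1" using s by simp
    also have "\<dots> = s powr ((b-3)+1)" by (rule powr_add[symmetric])
    also have "\<dots> = s powr (b-2)" by (simp add: algebra_simps)
    finally have "s powr (b-3) * s = s powr (b-2)" .
    then have "s powr (b-3) * min (s powr a) s * (1+s) powr (3-a-b) = s powr (b-2) * (1+s) powr (3-a-b)"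
      using mn by simp
    also have "1 \<le> \<dots>" using h1 h2 by (metis mult_mono' mult_1 zero_le_one)
    finally show ?thesis by simp
  qed
  also have "\<dots> \<le> \<kappa> * (s powr (b-1) * v) * (1+s) powr (3-a-b)"
    by (rule mult_right_mono[OF A]) simp
  finally show ?thesis .
qed

lemma pw2:
  fixes s v a b \<kappa> :: real
  assumes s: "0 < s" and v: "0 < v" and lb: "min (s powr a) s / \<kappa> \<le> s\<^sup>2 * v"
    and a: "0 < a" "a < 1" and k: "0 < \<kappa>" and ab: "a \<le> b" "b < 1"
  shows "s powr (b-1) / v \<le> \<kappa> * (1+s) powr (b+1-a)"
proof -
  define m where "m = min (s powr a) s"
  have m0: "0 < m" unfolding m_def using s by simp
  have v': "m / (\<kappa> * s\<^sup>2) \<le> v" using lb s k unfolding m_def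
    by (simp add: field_simps)
  have "s powr (b-1) / v \<le> s powr (b-1) / (m / (\<kappa> * s\<^sup>2))"
    by (rule divide_left_mono[OF v']) (use m0 s k v in auto)
  also have "\<dots> = \<kappa> * (s powr (b-1) * s\<^sup>2 / m)" using m0 s k by (simp add: field_simps)
  also have "s powr (b-1) * s\<^sup>2 = s powr (b+1)"
  proof -
    have "s powr (b+1) = s powr ((b-1) + 2)" by (simp add: add.commute)
    also have "\<dots> = s powr (b-1) * s powr 2" by (rule powr_add)
    finally show ?thesis using s by simp
  qed
  also have "s powr (b+1) / m \<le> (1+s) powr (b+1-a)"
  proof (cases "1 \<le> s")
    case True
    have "s powr a \<le> s powr 1" by (rule powr_mono) (use a True in auto)
    then have mn: "m = s powr a" using s unfolding m_def by simp
    have "s powr (b+1) / s powr a = s powr (b+1-a)" by (simp add: powr_diff)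
    also have "\<dots> \<le> (1+s) powr (b+1-a)" by (rule powr_mono2) (use a ab s in auto)
    finally show ?thesis using mn by simp
  next
    case False
    have "s powr 1 \<le> s powr a" by (rule powr_mono') (use a False s in auto)
    then have mn: "m = s" using s unfolding m_def by simp
    have "s powr (b+1) / s = s powr (b+1) / s powr 1" using s by simp
    also have "\<dots> = s powr b" using powr_diff[of s "b+1" 1] by simp
    also have "\<dots> \<le> (1+s) powr b" by (rule powr_mono2) (use a ab s in auto)
    also have "\<dots> \<le> (1+s) powr (b+1-a)" by (rule powr_mono) (use a s in auto)
    finally show ?thesis using mn by simp
  qed
  then have "\<kappa> * (s powr (b+1) / m) \<le> \<kappa> * (1+s) powr (b+1-a)"
    using k by (intro mult_left_mono) auto
  finally show ?thesis .
qed

lemma pw1p: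
  fixes s v a b \<kappa> p :: real
  assumes s: "0 < s" and v: "0 < v" and lb: "min (s powr a) s / \<kappa> \<le> s\<^sup>2 * v"
    and a: "0 < a" "a < 1" and k: "0 < \<kappa>" and ab: "a \<le> b" "b < 1"
  shows "p\<^sup>2 \<le> \<kappa> * (s powr (b-1) * v * p\<^sup>2) * (1+s) powr (3-a-b)"
proof -
  have "1 * p\<^sup>2 \<le> (\<kappa> * (s powr (b-1) * v) * (1+s) powr (3-a-b)) * p\<^sup>2"
    by (rule mult_right_mono[OF pw1[OF assms]]) simp
  then show ?thesis by (simp add: algebra_simps)
qed

lemma pw3:
  fixes s v a b \<kappa> p :: real
  assumes s: "0 < s" and v: "0 < v" and lb: "min (s powr a) s / \<kappa> \<le> s\<^sup>2 * v"
    and a: "0 < a" "a < 1" and k: "0 < \<kappa>" and ab: "a \<le> b" "b < 1" "1 < a + b"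
  shows "\<bar>p\<bar> powr ((1+a+b)/2) \<le> \<kappa> * (s powr (b-1) * v * p\<^sup>2) + (1+s) powr (1+a+b)"
proof (cases "p = 0")
  case True
  then show ?thesis using s v k by simp
next
  case False
  define th where "th = (1+a+b)/2"
  define c where "c = 3-a-b"
  define A where "A = \<kappa> * (s powr (b-1) * v * p\<^sup>2)"
  define B where "B = (1+s) powr (1+a+b)"
  have A0: "0 < A" unfolding A_def using s v k False by simp
  have B0: "0 < B" unfolding B_def using s by simp
  have p2: "p\<^sup>2 \<le> A * (1+s) powr c" using pw1p[OF assms(1-8), of p] unfolding A_def c_def .
  have "(p\<^sup>2) powr (th/2) = (\<bar>p\<bar> powr 2) powr (th/2)" by simp
  also have "\<dots> = \<bar>p\<bar> powr (2*(th/2))" by (rule powr_powr)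
  finally have "\<bar>p\<bar> powr th = (p\<^sup>2) powr (th/2)" by simp
  also have "\<dots> \<le> (A * (1+s) powr c) powr (th/2)"
    by (rule powr_mono2) (use p2 th_def a ab in auto)
  also have "\<dots> = A powr (th/2) * B powr (c/4)"
  proof -
    have "((1+s) powr c) powr (th/2) = (1+s) powr (c * (th/2))" by (rule powr_powr)
    also have "\<dots> = ((1+s) powr (1+a+b)) powr (c/4)"
      by (simp add: powr_powr th_def algebra_simps)
    finally show ?thesis unfolding B_def by (simp add: powr_mult)
  qed
  also have "\<dots> \<le> (th/2) * A + (c/4) * B"
  proof (rule Youngs_inequality_0)
    show "th / 2 + c / 4 = 1" unfolding th_def c_def by (simp add: field_simps)
  qed (use A0 B0 th_def c_def a ab in auto)
  also have "\<dots> \<le> A + B"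
  proof -
    have "(th/2) * A \<le> 1 * A" by (rule mult_right_mono) (use A0 th_def a ab in auto)
    moreover have "(c/4) * B \<le> 1 * B" by (rule mult_right_mono) (use B0 c_def a ab in auto)
    ultimately show ?thesis by simp
  qed
  finally show ?thesis unfolding th_def A_def B_def .
qed

lemma pw4:
  fixes s v a b \<kappa> p lam :: real
  assumes s: "0 < s" and v: "0 < v" and lb: "min (s powr a) s / \<kappa> \<le> s\<^sup>2 * v"
    and a: "0 < a" "a < 1" and k: "0 < \<kappa>" and ab: "a \<le> b" "b < 1" and lam: "0 < lam"
  shows "(1+s) powr ((a+b)/2 - 1) * \<bar>p\<bar> \<le> (\<kappa> * (s powr (b-1) * v * p\<^sup>2) / lam + lam * (1+s)) / 2"
proof -
  define X where "X = \<kappa> * (s powr (b-1) * v * p\<^sup>2)"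
  define Y where "Y = 1 + s"
  have X0: "0 \<le> X" unfolding X_def using s v k by simp
  have Y0: "0 < Y" unfolding Y_def using s by simp
  have p2: "p\<^sup>2 \<le> X * Y powr (3-a-b)" using pw1p[OF assms(1-8), of p] unfolding X_def Y_def .
  have "((1+s) powr ((a+b)/2 - 1) * \<bar>p\<bar>)\<^sup>2 = Y powr (a+b-2) * p\<^sup>2"
  proof -
    have "(Y powr ((a+b)/2 - 1))\<^sup>2 = Y powr ((a+b)/2-1) * Y powr ((a+b)/2-1)"
      by (simp add: power2_eq_square)
    also have "\<dots> = Y powr ((a+b)/2-1 + ((a+b)/2-1))" by (rule powr_add[symmetric])
    also have "\<dots> = Y powr (a+b-2)" by (rule arg_cong[where f="\<lambda>z. Y powr z"]) (simp add: field_simps)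
    finally have "(Y powr ((a+b)/2 - 1))\<^sup>2 = Y powr (a+b-2)" .
    then show ?thesis unfolding Y_def by (simp add: power_mult_distrib)
  qed
  also have "\<dots> \<le> Y powr (a+b-2) * (X * Y powr (3-a-b))"
    by (rule mult_left_mono[OF p2]) simp
  also have "\<dots> = X * (Y powr (a+b-2) * Y powr (3-a-b))" by simp
  also have "Y powr (a+b-2) * Y powr (3-a-b) = Y"
    using Y0 by (simp add: powr_add[symmetric])
  also have "X * Y \<le> ((X / lam + lam * Y) / 2)\<^sup>2"
  proof -
    have "((X / lam + lam * Y) / 2)\<^sup>2 - X * Y = ((X / lam - lam * Y) / 2)\<^sup>2"
      using lam by (simp add: power2_eq_square field_simps)
    then show ?thesis by (metis diff_ge_0_iff_ge zero_le_power2)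
  qed
  finally have sq: "((1+s) powr ((a+b)/2 - 1) * \<bar>p\<bar>)\<^sup>2 \<le> ((X / lam + lam * Y) / 2)\<^sup>2" .
  have "0 \<le> (X / lam + lam * Y) / 2" using X0 Y0 lam by simp
  from power2_le_imp_le[OF sq this] show ?thesis unfolding X_def Y_def .
qed

lemma pw5:
  fixes s v a b \<kappa> p \<eta> P l :: real
  assumes s: "0 < s" and v: "0 < v" and lb: "min (s powr a) s / \<kappa> \<le> s\<^sup>2 * v"
    and a: "0 < a" "a < 1" and k: "0 < \<kappa>" and ab: "a \<le> b" "b < 1"
    and eta: "0 \<le> \<eta>" and P: "\<bar>P\<bar> \<le> l * s"
  shows "s powr (b-2) * p * (\<eta> * p + s * v * p + P) \<ge>
     (s powr (b-1) * v * p\<^sup>2) / 2 - (l\<^sup>2 * \<kappa> / 2) * (1+s) powr (b+1-a)"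
proof -
  define q where "q = s powr (b-1)"
  have q0: "0 < q" unfolding q_def using s by simp
  have sq: "s powr (b-2) * s = q"
  proof -
    have "s powr (b-2) * s = s powr (b-2) * s powr 1" using s by simp
    also have "\<dots> = s powr ((b-2)+1)" by (rule powr_add[symmetric])
    finally show ?thesis unfolding q_def by (simp add: algebra_simps)
  qed
  have e: "s powr (b-2) * p * (\<eta> * p + s * v * p + P) =
      \<eta> * (s powr (b-2) * p\<^sup>2) + q * v * p\<^sup>2 + s powr (b-2) * p * P"
    using sq by (simp add: algebra_simps power2_eq_square)
  have t1: "0 \<le> \<eta> * (s powr (b-2) * p\<^sup>2)" using eta by simp
  have "\<bar>s powr (b-2) * p * P\<bar> \<le> s powr (b-2) * \<bar>p\<bar> * (l * s)"
    by (simp add: abs_mult mult_left_mono P)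
  also have "\<dots> = q * (\<bar>p\<bar> * l)" using sq by (simp add: algebra_simps)
  also have "\<bar>p\<bar> * l \<le> (v * p\<^sup>2 + l\<^sup>2 / v) / 2"
  proof -
    have "(v * p\<^sup>2 + l\<^sup>2 / v) / 2 - \<bar>p\<bar> * l = (v * \<bar>p\<bar> - l)\<^sup>2 / (2 * v)"
      using v by (simp add: power2_eq_square field_simps)
    moreover have "0 \<le> (v * \<bar>p\<bar> - l)\<^sup>2 / (2 * v)" using v by simp
    ultimately show ?thesis by linarith
  qed
  then have "q * (\<bar>p\<bar> * l) \<le> q * ((v * p\<^sup>2 + l\<^sup>2 / v) / 2)" using q0 by simp
  finally have t3: "s powr (b-2) * p * P \<ge> - (q * v * p\<^sup>2 / 2 + l\<^sup>2 * (q / v) / 2)"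
    by (simp add: algebra_simps)
  have h: "q / v \<le> \<kappa> * (1+s) powr (b+1-a)" unfolding q_def by (rule pw2[OF assms(1-8)])
  have "(l\<^sup>2 / 2) * (q / v) \<le> (l\<^sup>2 / 2) * (\<kappa> * (1+s) powr (b+1-a))"
    by (rule mult_left_mono[OF h]) simp
  then have t4: "l\<^sup>2 * (q / v) / 2 \<le> (l\<^sup>2 * \<kappa> / 2) * (1+s) powr (b+1-a)"
    by (simp add: algebra_simps)
  show ?thesis unfolding e using t1 t3 t4 unfolding q_def by linarith
qed


lemma dmin:
  fixes n :: nat and x :: real
  assumes n: "2 \<le> n"
  shows "((\<lambda>r. (min r 0)^n) has_real_derivative real n * (min x 0)^(n-1)) (at x)"
proof -
  consider "x < 0" | "x > 0" | "x = 0" by linarith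
  then show ?thesis
  proof cases
    case 1
    have d: "((\<lambda>r. r^n) has_real_derivative real n * x^(n - Suc 0)) (at x)" by (rule DERIV_pow)
    have "((\<lambda>r. (min r 0)^n) has_real_derivative real n * x^(n - Suc 0)) (at x)"
      by (rule has_field_derivative_transform_within_open[OF d, of "{..<0}"]) (use 1 in auto)
    then show ?thesis using 1 by simp
  next
    case 2
    have d: "((\<lambda>r. 0::real) has_real_derivative 0) (at x)" by (rule DERIV_const)
    have "((\<lambda>r. (min r 0)^n) has_real_derivative 0) (at x)"
      by (rule has_field_derivative_transform_within_open[OF d, of "{0<..}"]) (use 2 n in auto)
    moreover have z: "real n * (min x 0)^(n-1) = 0" using n 2 by (simp add: power_0_left)
    ultimately show ?thesis using 2 by (simp only: z)
  next
    case 3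
    have "((\<lambda>h. (min h 0)^n / h) \<longlongrightarrow> 0) (at (0::real))"
    proof (rule tendsto_0_le[where f="\<lambda>h. h" and K=1])
      show "((\<lambda>h::real. h) \<longlongrightarrow> 0) (at 0)" by (rule tendsto_ident_at)
      have *: "norm ((min h 0)^n / h) \<le> norm h" if h: "h \<noteq> 0" "norm h < 1" for h :: real
      proof -
        have h1: "\<bar>h\<bar> < 1" using h by simp
        have "\<bar>min h 0\<bar> \<le> \<bar>h\<bar>" by simp
        then have "\<bar>min h 0\<bar>^n \<le> \<bar>h\<bar>^n" by (rule power_mono) simp
        also have "\<bar>h\<bar>^n = \<bar>h\<bar> * \<bar>h\<bar> * \<bar>h\<bar>^(n-2)"
          using n by (metis (no_types) le_add_diff_inverse mult.assoc power_add power2_eq_square)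
        also have "\<dots> \<le> \<bar>h\<bar> * \<bar>h\<bar> * 1"
          by (rule mult_left_mono) (use h1 in \<open>auto intro: power_le_one\<close>)
        finally have "\<bar>min h 0\<bar>^n \<le> \<bar>h\<bar> * \<bar>h\<bar>" by simp
        then show ?thesis
          using h by (simp add: abs_divide power_abs divide_le_eq)
      qed
      show "\<forall>\<^sub>F h in at (0::real). norm ((min h 0)^n / h) \<le> norm h * 1"
        using * unfolding eventually_at by (intro exI[of _ 1]) auto
    qed
    moreover have "(0::real)^n = 0" using n by simp
    ultimately have "((\<lambda>r. (min r 0)^n) has_real_derivative 0) (at 0)"
      unfolding DERIV_def by (simp add: zero_power)
    moreover have z: "real n * (min x 0)^(n-1) = 0" using n 3 by (simp add: power_0_left)
    ultimately show ?thesis using 3 by (simp only: z min.idem)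
  qed
qed

lemma int_abs_sub:
  fixes w' :: "real \<Rightarrow> real"
  assumes ia: "(\<lambda>x. \<bar>w' x\<bar>) integrable_on {0..L}" and sub: "0 \<le> p" "p \<le> q" "q \<le> L"
    and h: "(w' has_integral I) {p..q}"
  shows "\<bar>I\<bar> \<le> integral {0..L} (\<lambda>x. \<bar>w' x\<bar>)"
proof -
  have ia': "(\<lambda>x. \<bar>w' x\<bar>) integrable_on {p..q}" by (rule integrable_on_subinterval[OF ia]) (use sub in auto)
  have i1: "w' integrable_on {p..q}" using h by blast
  have "I = integral {p..q} w'" using h by (simp add: integral_unique)
  have "I \<le> integral {p..q} (\<lambda>x. \<bar>w' x\<bar>)"
    using integral_le[OF i1 ia'] h by (simp add: integral_unique)
  moreover have "- I \<le> integral {p..q} (\<lambda>x. \<bar>w' x\<bar>)"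
  proof -
    have hn: "((\<lambda>x. - w' x) has_integral - I) {p..q}" using has_integral_neg[OF h] .
    have "integral {p..q} (\<lambda>x. - w' x) \<le> integral {p..q} (\<lambda>x. \<bar>w' x\<bar>)"
      by (rule integral_le[OF _ ia']) (use hn in auto)
    moreover have "integral {p..q} (\<lambda>x. - w' x) = - I" using hn by (rule integral_unique)
    ultimately show ?thesis by simp
  qed
  moreover have "integral {p..q} (\<lambda>x. \<bar>w' x\<bar>) \<le> integral {0..L} (\<lambda>x. \<bar>w' x\<bar>)"
    by (rule integral_subset_le[OF _ ia' ia]) (use sub in auto)
  ultimately show ?thesis by linarith
qed

lemma sup_est:
  fixes w w' :: "real \<Rightarrow> real"
  assumes L: "0 < L" and cw: "continuous_on {0..L} w" and cw': "continuous_on {0..L} w'"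
    and dw: "\<And>x. x \<in> {0..L} \<Longrightarrow> (w has_real_derivative w' x) (at x within {0..L})"
    and x: "x \<in> {0..L}"
  shows "L * w x \<le> integral {0..L} w + L * integral {0..L} (\<lambda>x. \<bar>w' x\<bar>)"
proof -
  obtain y where y: "y \<in> {0..L}" and ymin: "\<And>z. z \<in> {0..L} \<Longrightarrow> w y \<le> w z"
    using continuous_attains_inf[of "{0..L}" w] cw L by auto
  have "integral {0..L} (\<lambda>_. w y) \<le> integral {0..L} w"
    by (rule integral_le) (use integrable_continuous_real[OF cw] ymin in auto)
  then have iw: "L * w y \<le> integral {0..L} w" using L by simp
  have ia: "(\<lambda>x. \<bar>w' x\<bar>) integrable_on {0..L}"
    by (rule integrable_continuous_real) (intro continuous_intros cw')
  have dv: "(w has_vector_derivative w' z) (at z within {p..q})" if "z \<in> {p..q}" "0 \<le> p" "q \<le> L" for z p q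
  proof -
    have "z \<in> {0..L}" using that by auto
    from dw[OF this] have "(w has_vector_derivative w' z) (at z within {0..L})"
      by (simp add: has_real_derivative_iff_has_vector_derivative)
    then show ?thesis by (rule has_vector_derivative_within_subset) (use that in auto)
  qed
  have key: "w x - w y \<le> integral {0..L} (\<lambda>x. \<bar>w' x\<bar>)"
  proof (cases "y \<le> x")
    case True
    have h: "(w' has_integral w x - w y) {y..x}"
      by (rule fundamental_theorem_of_calculus[OF True]) (rule dv, use x y in auto)
    show ?thesis using int_abs_sub[OF ia _ True _ h] x y by auto
  next
    case False
    then have F: "x \<le> y" by simp
    have h: "(w' has_integral w y - w x) {x..y}"
      by (rule fundamental_theorem_of_calculus[OF F]) (rule dv, use x y in auto)
    show ?thesis using int_abs_sub[OF ia _ F _ h] x y by auto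
  qed
  have "L * w x = L * (w x - w y) + L * w y" by (simp add: algebra_simps)
  also have "\<dots> \<le> L * integral {0..L} (\<lambda>x. \<bar>w' x\<bar>) + integral {0..L} w"
    using mult_left_mono[OF key, of L] L iw by linarith
  finally show ?thesis by simp
qed

lemma absorb:
  fixes K g y :: real
  assumes K: "0 \<le> K" and g: "0 \<le> g" "g < 1" and y: "1 \<le> y"
  shows "K * y powr g \<le> y / 4 + K * (1 + (4 * K) powr (1 / (1 - g)))"
proof (cases "y \<le> max 1 ((4 * K) powr (1 / (1 - g)))")
  case True
  have "y powr g \<le> y powr 1" by (rule powr_mono) (use g y in auto)
  also have "\<dots> = y" using y by simp
  also have "\<dots> \<le> 1 + (4 * K) powr (1 / (1 - g))"
  proof -
    have "0 \<le> (4 * K) powr (1 / (1 - g))" by simp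
    then show ?thesis using True unfolding max_def by (smt (verit))
  qed
  finally have "K * y powr g \<le> K * (1 + (4 * K) powr (1 / (1 - g)))" using K by (simp add: mult_left_mono)
  then show ?thesis using y by simp
next
  case False
  then have y1: "(4 * K) powr (1 / (1 - g)) < y" by simp
  show ?thesis
  proof (cases "K = 0")
    case True then show ?thesis using y by simp
  next
    case Kp: False
    then have K0: "0 < K" using K by simp
    have "((4 * K) powr (1 / (1 - g))) powr (1 - g) \<le> y powr (1 - g)"
      by (rule powr_mono2) (use g y1 in auto)
    moreover have "((4 * K) powr (1 / (1 - g))) powr (1 - g) = 4 * K"
      using g K0 by (simp add: powr_powr)
    ultimately have h: "4 * K \<le> y powr (1 - g)" by simp
    have "K * y powr g * 4 = (4 * K) * y powr g" by simp
    also have "\<dots> \<le> y powr (1 - g) * y powr g" by (rule mult_right_mono[OF h]) simp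
    also have "\<dots> = y" using y by (simp add: powr_add[symmetric])
    finally have "K * y powr g \<le> y / 4" by simp
    then show ?thesis using K by (simp add: add_increasing2)
  qed
qed


lemma deriv_on_pos:
  fixes g h h' :: "real \<Rightarrow> real"
  assumes e: "\<And>s. 0 < s \<Longrightarrow> g s = h s" and d: "\<And>s. 0 < s \<Longrightarrow> (h has_real_derivative h' s) (at s)"
    and s: "0 < s"
  shows "(g has_real_derivative h' s) (at s)" "deriv g s = h' s"
proof -
  show g: "(g has_real_derivative h' s) (at s)"
    by (rule has_field_derivative_transform_within_open[OF d[OF s], of "{0<..}"]) (use s e in auto)
  show "deriv g s = h' s" using DERIV_imp_deriv[OF g] .
qed

lemma funpow2: "(deriv ^^ 2) f = deriv (deriv f)"
  by (simp add: numeral_2_eq_2)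

lemma pot_props:
  assumes L: "0 < L" and V: "potential_ok L V"
  shows "\<And>x. x \<in> {0..L} \<Longrightarrow> (V has_real_derivative dxL L V x) (at x within {0..L})"
    and "continuous_on {0..L} (dxL L V)"
    and "continuous_on {0..L} V"
    and "\<And>x. x \<in> {0..L} \<Longrightarrow> \<bar>dxL L V x\<bar> \<le> lip_const L V"
proof -
  have C: "C31_on L V" using V unfolding potential_ok_def by simp
  have all: "\<forall>j<3. \<forall>x\<in>{0..L}. ((dxL L ^^ j) V) differentiable (at x within {0..L})"
    using C unfolding C31_on_def by blast
  have d0: "V differentiable (at x within {0..L})" if "x \<in> {0..L}" for x
    using all[rule_format, of 0 x] that by simp
  have d1: "(dxL L V) differentiable (at x within {0..L})" if "x \<in> {0..L}" for x
  proof -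
    have "((dxL L ^^ 1) V) differentiable (at x within {0..L})"
      using all[rule_format, of 1 x] that by simp
    then show ?thesis by simp
  qed
  show hd: "\<And>x. x \<in> {0..L} \<Longrightarrow> (V has_real_derivative dxL L V x) (at x within {0..L})"
    using dxL_hasd[OF L _ d0] by blast
  show cV': "continuous_on {0..L} (dxL L V)"
    using d1 differentiable_imp_continuous_within continuous_on_eq_continuous_within by blast
  show cV: "continuous_on {0..L} V"
    using d0 differentiable_imp_continuous_within continuous_on_eq_continuous_within by blast
  obtain B where B0: "B \<ge> 0" and B: "\<And>x. x \<in> {0..L} \<Longrightarrow> norm (dxL L V x) \<le> B"
    using continuous_on_compact_bound[OF compact_Icc cV'] by blast
  have lipy: "\<bar>V z - V y\<bar> \<le> B * \<bar>z - y\<bar>" if yz: "0 \<le> y" "y < z" "z \<le> L" for y z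
  proof -
    have "continuous_on {y..z} V" by (rule continuous_on_subset[OF cV]) (use yz in auto)
    moreover have "V differentiable (at w)" if "y < w" "w < z" for w
    proof -
      have "w \<in> {0<..<L}" using that yz by auto
      then have "(V has_real_derivative dxL L V w) (at w)" using within_int[OF hd] by auto
      then show ?thesis using real_differentiable_def by blast
    qed
    ultimately obtain l w where w: "y < w" "w < z" and dw: "DERIV V w :> l" and eq: "V z - V y = (z - y) * l"
      using MVT[OF yz(2)] by blast
    have "w \<in> {0<..<L}" using w yz by auto
    then have "DERIV V w :> dxL L V w" using within_int[OF hd] by auto
    then have "l = dxL L V w" using DERIV_unique[OF dw] by simp
    then have "\<bar>l\<bar> \<le> B" using B[of w] w yz by auto
    then show ?thesis unfolding eq using yz by (simp add: abs_mult mult.commute mult_left_mono)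
  qed
  define Q where "Q = (\<lambda>(x,y). \<bar>V x - V y\<bar> / \<bar>x - y\<bar>) ` {(x,y). x \<in> {0..L} \<and> y \<in> {0..L} \<and> x \<noteq> y}"
  have Qb: "q \<le> B" if "q \<in> Q" for q
  proof -
    obtain x y where xy: "x \<in> {0..L}" "y \<in> {0..L}" "x \<noteq> y" and q: "q = \<bar>V x - V y\<bar> / \<bar>x - y\<bar>"
      using \<open>q \<in> Q\<close> unfolding Q_def by auto
    have "\<bar>V x - V y\<bar> \<le> B * \<bar>x - y\<bar>"
    proof (cases "y < x")
      case True then show ?thesis using lipy[of y x] xy by auto
    next
      case False then have "x < y" using xy by auto
      then show ?thesis using lipy[of x y] xy by (auto simp: abs_minus_commute)
    qed
    then show ?thesis unfolding q using xy by (simp add: divide_le_eq)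
  qed
  have bdd: "bdd_above Q" using Qb unfolding bdd_above_def by blast
  show "\<bar>dxL L V x\<bar> \<le> lip_const L V" if x: "x \<in> {0..L}" for x
  proof -
    have lim: "((\<lambda>y. \<bar>(V y - V x) / (y - x)\<bar>) \<longlongrightarrow> \<bar>dxL L V x\<bar>) (at x within {0..L})"
      using hd[OF x] unfolding has_field_derivative_iff by (rule tendsto_rabs)
    have ntl: "\<not> trivial_limit (at x within {0..L})"
      using x L by (simp add: trivial_limit_within)
    have ev: "\<forall>\<^sub>F y in at x within {0..L}. \<bar>(V y - V x) / (y - x)\<bar> \<le> Sup Q"
      unfolding eventually_at_filter
    proof (rule always_eventually, intro allI impI)
      fix y assume y: "y \<noteq> x" "y \<in> {0..L}"
      have "\<bar>V y - V x\<bar> / \<bar>y - x\<bar> \<in> Q" unfolding Q_def using x y by (auto intro!: image_eqI[of _ _ "(y,x)"])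
      then show "\<bar>(V y - V x) / (y - x)\<bar> \<le> Sup Q" using cSup_upper[OF _ bdd] by (simp add: abs_divide)
    qed
    have "\<bar>dxL L V x\<bar> \<le> Sup Q" by (rule tendsto_upperbound[OF lim ev ntl])
    then show ?thesis unfolding lip_const_def Q_def .
  qed
qed

lemma f_props:
  assumes H: "hyp1 f a \<kappa> \<or> hyp2 L f a \<kappa>"
  shows "0 < a" "a < 1" "0 < \<kappa>"
    "\<And>s. 0 < s \<Longrightarrow> (deriv f has_real_derivative (deriv ^^ 2) f s) (at s)"
    "continuous_on {0<..} ((deriv ^^ 2) f)"
    "\<And>s. 0 < s \<Longrightarrow> min (s powr a) s / \<kappa> \<le> s\<^sup>2 * (deriv ^^ 2) f s"
proof -
  have ak: "0 < a \<and> a < 1 \<and> 0 < \<kappa>" using H unfolding hyp1_def hyp2_def by auto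
  then show "0 < a" "a < 1" "0 < \<kappa>" by auto
  have lbA: "min (s powr a) s / \<kappa> \<le> s\<^sup>2 * (deriv ^^ 2) f s"
    if s: "0 < s" and h: "s powr a / (a * \<kappa>) \<le> s\<^sup>2 * (deriv ^^ 2) f s" for s
  proof -
    have "min (s powr a) s / \<kappa> \<le> s powr a / \<kappa>" using ak by (simp add: divide_right_mono)
    also have "\<dots> \<le> s powr a / (a * \<kappa>)"
      using ak by (intro divide_left_mono) (auto intro: mult_left_le_one_le)
    finally show ?thesis using h by simp
  qed
  have lbB: "min (s powr a) s / \<kappa> \<le> s\<^sup>2 * (deriv ^^ 2) f s"
    if s: "0 < s" and h: "s / \<kappa> \<le> s\<^sup>2 * (deriv ^^ 2) f s" for s
  proof -
    have "min (s powr a) s / \<kappa> \<le> s / \<kappa>" using ak by (simp add: divide_right_mono)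
    then show ?thesis using h by simp
  qed
  have "(\<forall>s>0. (deriv f has_real_derivative (deriv ^^ 2) f s) (at s)) \<and>
        continuous_on {0<..} ((deriv ^^ 2) f) \<and>
        (\<forall>s>0. min (s powr a) s / \<kappa> \<le> s\<^sup>2 * (deriv ^^ 2) f s)"
  proof (cases "hyp1 f a \<kappa>")
    case True
    then have "(\<exists>lam>0. (\<forall>s>0. f s = lam / (a - 1) * s powr a) \<and>
         (\<forall>s>0. s powr a / (a * \<kappa>) \<le> s\<^sup>2 * (deriv ^^ 2) f s))
      \<or> (\<exists>lam>0. (\<forall>s>0. f s = lam * s * ln s) \<and> (\<forall>s>0. s / \<kappa> \<le> s\<^sup>2 * (deriv ^^ 2) f s))"
      unfolding hyp1_def by blast
    then show ?thesis
    proof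
      assume "\<exists>lam>0. (\<forall>s>0. f s = lam / (a - 1) * s powr a) \<and>
         (\<forall>s>0. s powr a / (a * \<kappa>) \<le> s\<^sup>2 * (deriv ^^ 2) f s)"
      then obtain lam where fe: "\<And>s. 0 < s \<Longrightarrow> f s = lam / (a - 1) * s powr a"
        and lb: "\<And>s. 0 < s \<Longrightarrow> s powr a / (a * \<kappa>) \<le> s\<^sup>2 * (deriv ^^ 2) f s" by blast
      define c where "c = lam / (a - 1)"
      have d1: "((\<lambda>z. c * z powr a) has_real_derivative c * (a * s powr (a - 1))) (at s)" if "0 < s" for s
        by (rule DERIV_cmult, rule has_real_derivative_powr) (use that in auto)
      have e1: "deriv f s = c * (a * s powr (a - 1))" if "0 < s" for s
        using deriv_on_pos(2)[OF _ d1 that] fe unfolding c_def by blast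
      have d2: "((\<lambda>z. c * (a * z powr (a - 1))) has_real_derivative c * (a * ((a - 1) * s powr (a - 1 - 1)))) (at s)" if "0 < s" for s
        by (rule DERIV_cmult, rule DERIV_cmult, rule has_real_derivative_powr) (use that in auto)
      have D: "(deriv f has_real_derivative c * (a * ((a - 1) * s powr (a - 1 - 1)))) (at s)" if "0 < s" for s
        using deriv_on_pos(1)[OF _ d2 that] e1 by blast
      have E: "(deriv ^^ 2) f s = c * (a * ((a - 1) * s powr (a - 1 - 1)))" if "0 < s" for s
        unfolding funpow2 using DERIV_imp_deriv[OF D[OF that]] .
      have C: "continuous_on {0<..} ((deriv ^^ 2) f)"
      proof -
        have "continuous_on {0<..} (\<lambda>s. c * (a * ((a - 1) * s powr (a - 1 - 1))))"
          by (intro continuous_intros) auto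
        then show ?thesis by (rule continuous_on_cong[THEN iffD1, rotated 2]) (auto simp: E)
      qed
      show ?thesis using D E C lb lbA by auto
    next
      assume "\<exists>lam>0. (\<forall>s>0. f s = lam * s * ln s) \<and> (\<forall>s>0. s / \<kappa> \<le> s\<^sup>2 * (deriv ^^ 2) f s)"
      then obtain lam where fe: "\<And>s. 0 < s \<Longrightarrow> f s = lam * s * ln s"
        and lb: "\<And>s. 0 < s \<Longrightarrow> s / \<kappa> \<le> s\<^sup>2 * (deriv ^^ 2) f s" by blast
      have d1: "((\<lambda>z. lam * z * ln z) has_real_derivative lam * (ln s + 1)) (at s)" if "0 < s" for s
        using that by (auto intro!: derivative_eq_intros simp: field_simps)
      have e1: "deriv f s = lam * (ln s + 1)" if "0 < s" for s
        using deriv_on_pos(2)[OF _ d1 that] fe by blast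
      have d2: "((\<lambda>z. lam * (ln z + 1)) has_real_derivative lam / s) (at s)" if "0 < s" for s
        using that by (auto intro!: derivative_eq_intros simp: field_simps)
      have D: "(deriv f has_real_derivative lam / s) (at s)" if "0 < s" for s
        using deriv_on_pos(1)[OF _ d2 that] e1 by blast
      have E: "(deriv ^^ 2) f s = lam / s" if "0 < s" for s
        unfolding funpow2 using DERIV_imp_deriv[OF D[OF that]] .
      have C: "continuous_on {0<..} ((deriv ^^ 2) f)"
      proof -
        have "continuous_on {0<..} (\<lambda>s::real. lam / s)"
          by (intro continuous_intros) auto
        then show ?thesis by (rule continuous_on_cong[THEN iffD1, rotated 2]) (auto simp: E)
      qed
      show ?thesis using D E C lb lbB by auto
    qed
  next
    case False
    then have h2: "hyp2 L f a \<kappa>" using H by blast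
    have dk: "\<forall>k<4. \<forall>s>0. ((deriv ^^ k) f) differentiable (at s)" using h2[unfolded hyp2_def, THEN conjunct2, THEN conjunct2, THEN conjunct2, THEN conjunct1] .
    have lb: "\<forall>s>0. s powr a / (a * \<kappa>) \<le> s\<^sup>2 * (deriv ^^ 2) f s"
      using h2[unfolded hyp2_def, THEN conjunct2, THEN conjunct2, THEN conjunct2, THEN conjunct2,
        THEN conjunct2, THEN conjunct2, THEN conjunct1] .
    have D: "(deriv f has_real_derivative (deriv ^^ 2) f s) (at s)" if "0 < s" for s
    proof -
      have "((deriv ^^ 1) f) differentiable (at s)" using dk[rule_format, of 1 s] that by simp
      then show ?thesis unfolding funpow2 by (simp add: DERIV_deriv_iff_real_differentiable)
    qed
    have C: "continuous_on {0<..} ((deriv ^^ 2) f)"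
    proof -
      have "isCont ((deriv ^^ 2) f) s" if "0 < s" for s
        using dk[rule_format, of 2 s] that by (simp add: differentiable_imp_continuous_within)
      then show ?thesis by (intro continuous_at_imp_continuous_on) auto
    qed
    show ?thesis using D C lb lbA by auto
  qed
  then show "\<And>s. 0 < s \<Longrightarrow> (deriv f has_real_derivative (deriv ^^ 2) f s) (at s)"
    "continuous_on {0<..} ((deriv ^^ 2) f)"
    "\<And>s. 0 < s \<Longrightarrow> min (s powr a) s / \<kappa> \<le> s\<^sup>2 * (deriv ^^ 2) f s" by auto
qed


abbreviation "qf \<equiv> (\<lambda>r::real. - ((min r 0)^3))"
abbreviation "qf1 \<equiv> (\<lambda>r::real. - (3 * (min r 0)^2))"
abbreviation "qf2 \<equiv> (\<lambda>r::real. - (6 * min r 0))"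

lemma qf_derivs:
  shows "(qf has_real_derivative qf1 y) (at y)" "(qf1 has_real_derivative qf2 y) (at y)"
    "continuous_on UNIV qf2"
proof -
  show "(qf has_real_derivative qf1 y) (at y)"
    using DERIV_minus[OF dmin[of 3 y]] by simp
  show "(qf1 has_real_derivative qf2 y) (at y)"
    using DERIV_minus[OF DERIV_cmult[OF dmin[of 2 y], of 3]] by simp
  show "continuous_on UNIV qf2" by (intro continuous_intros)
qed

lemma q_pw:
  fixes u p bb B \<eta> :: real
  assumes eta: "0 < \<eta>" and bb: "\<bar>bb\<bar> \<le> B"
  shows "qf2 u * p * (\<eta> * p + u * bb) \<ge> - (3 * B\<^sup>2 / (2 * \<eta>)) * qf u"
proof (cases "u < 0")
  case False
  then show ?thesis by (simp add: min_def)
next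
  case True
  then have m: "min u 0 = u" by simp
  have sq: "0 \<le> (2 * \<eta> * p + u * bb)\<^sup>2" by simp
  have k1: "p * (\<eta> * p + u * bb) \<ge> - (u\<^sup>2 * bb\<^sup>2) / (4 * \<eta>)"
  proof -
    have "(2 * \<eta> * p + u * bb)\<^sup>2 = 4 * \<eta> * (p * (\<eta> * p + u * bb)) + u\<^sup>2 * bb\<^sup>2"
      by (simp add: power2_eq_square algebra_simps)
    then have "- (u\<^sup>2 * bb\<^sup>2) \<le> 4 * \<eta> * (p * (\<eta> * p + u * bb))" using sq by linarith
    then show ?thesis using eta by (simp add: field_simps)
  qed
  have bb2: "bb\<^sup>2 \<le> B\<^sup>2" using bb by (metis abs_ge_zero abs_le_square_iff order_trans power2_abs power_mono)
  have "u\<^sup>2 * bb\<^sup>2 \<le> u\<^sup>2 * B\<^sup>2" by (rule mult_left_mono[OF bb2]) simp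
  then have k2: "p * (\<eta> * p + u * bb) \<ge> - (u\<^sup>2 * B\<^sup>2) / (4 * \<eta>)"
    using k1 eta by (smt (verit) divide_right_mono zero_le_numeral mult_nonneg_nonneg)
  have pos6: "0 \<le> - 6 * u" using True by simp
  have e: "(- 6 * u) * (- (u\<^sup>2 * B\<^sup>2) / (4 * \<eta>)) = - (3 * B\<^sup>2 / (2 * \<eta>)) * (- (u^3))"
    using eta by (simp add: power2_eq_square power3_eq_cube field_simps)
  have "- (3 * B\<^sup>2 / (2 * \<eta>)) * qf u = (- 6 * u) * (- (u\<^sup>2 * B\<^sup>2) / (4 * \<eta>))"
    using e m by (simp add: power2_eq_square power3_eq_cube)
  also have "\<dots> \<le> (- 6 * u) * (p * (\<eta> * p + u * bb))"
    by (rule mult_left_mono[OF k2 pos6])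
  also have "\<dots> = qf2 u * p * (\<eta> * p + u * bb)" using m by simp
  finally show ?thesis .
qed

lemma qf_nonneg: "0 \<le> qf r"
proof -
  have m: "min r 0 \<le> 0" by simp
  have "min r 0 * min r 0 * min r 0 \<le> 0"
    using mult_nonneg_nonpos[of "min r 0 * min r 0" "min r 0"] m by simp
  then show ?thesis by (simp add: power3_eq_cube)
qed

lemma nonneg_gen:
  assumes fs: "fluxsys L T u ux ut J UNIV qf qf1 qf2"
    and Jf: "\<And>t x. t \<in> {0..T} \<Longrightarrow> x \<in> {0..L} \<Longrightarrow> J t x = \<eta> * ux t x + u t x * bb t x"
    and cbb: "continuous_on ({0..T}\<times>{0..L}) (\<lambda>(t,x). bb t x)"
    and eta: "0 < \<eta>" and init: "\<And>x. x \<in> {0..L} \<Longrightarrow> 0 \<le> u 0 x"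
    and t: "t \<in> {0..T}" and x: "x \<in> {0..L}"
  shows "0 \<le> u t x"
proof -
  interpret fs: fluxsys L T u ux ut J UNIV qf qf1 qf2 by (rule fs)
  obtain B where B0: "B \<ge> 0" and B: "\<And>z. z \<in> {0..T}\<times>{0..L} \<Longrightarrow> norm ((\<lambda>(t,x). bb t x) z) \<le> B"
    using continuous_on_compact_bound[OF compact_Times[OF compact_Icc compact_Icc] cbb] by blast
  define C where "C = 3 * B\<^sup>2 / (2 * \<eta>)"
  have Gt: "- C * fs.F s \<le> fs.G s" if s: "s \<in> {0..T}" for s
  proof -
    have i1: "(\<lambda>x. qf (u s x)) integrable_on {0..L}"
      by (rule integrable_continuous_real) (rule cont_slice[OF fs.cPu s])
    have i2: "(\<lambda>x. qf2 (u s x) * ux s x * J s x) integrable_on {0..L}"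
      by (rule integrable_continuous_real) (use cont_slice[OF fs.cg s] in simp)
    have "integral {0..L} (\<lambda>x. - C * qf (u s x)) \<le> integral {0..L} (\<lambda>x. qf2 (u s x) * ux s x * J s x)"
    proof (rule integral_le)
      show "(\<lambda>x. - C * qf (u s x)) integrable_on {0..L}" using integrable_on_cmult_left[OF i1, of "- C"] by simp
      show "(\<lambda>x. qf2 (u s x) * ux s x * J s x) integrable_on {0..L}" by (rule i2)
      fix y assume y: "y \<in> {0..L}"
      have bb: "\<bar>bb s y\<bar> \<le> B" using B[of "(s,y)"] s y by simp
      show "- C * qf (u s y) \<le> qf2 (u s y) * ux s y * J s y"
        unfolding Jf[OF s y] C_def using q_pw[OF eta bb] by simp
    qed
    then show ?thesis unfolding fs.F_def fs.G_def by (simp add: integral_mult_right)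
  qed
  define H where "H t = exp (- C * t) * fs.F t" for t
  have dH: "DERIV H z :> exp (- C * z) * (- C) * fs.F z + (- fs.G z) * exp (- C * z)" if z: "z \<in> {0<..<T}" for z
  proof -
    have de: "((\<lambda>t. exp (- C * t)) has_real_derivative exp (- C * z) * (- C)) (at z)"
      by (auto intro!: derivative_eq_intros)
    show ?thesis unfolding H_def using DERIV_mult[OF de fs.dF[OF z]] .
  qed
  have dHle: "exp (- C * z) * (- C) * fs.F z + (- fs.G z) * exp (- C * z) \<le> 0" if z: "z \<in> {0<..<T}" for z
  proof -
    have "- fs.G z \<le> C * fs.F z" using Gt[of z] z by auto
    then have "(- fs.G z) * exp (- C * z) \<le> (C * fs.F z) * exp (- C * z)" by (rule mult_right_mono) simp
    then show ?thesis by (simp add: algebra_simps)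
  qed
  have F0: "fs.F 0 = 0"
  proof -
    have "integral {0..L} (\<lambda>x. qf (u 0 x)) = integral {0..L} (\<lambda>x. 0)"
      by (rule integral_cong) (use init in \<open>fastforce simp: min_def\<close>)
    then show ?thesis unfolding fs.F_def by simp
  qed
  have Ft_le: "fs.F t \<le> 0"
  proof (cases "t = 0")
    case True then show ?thesis using F0 by simp
  next
    case False
    then have t0: "0 < t" using t by simp
    have cH: "continuous_on {0..t} H"
      unfolding H_def by (intro continuous_intros continuous_on_subset[OF fs.cF]) (use t in auto)
    have dfH: "H differentiable (at y)" if "0 < y" "y < t" for y
      using dH[of y] that t unfolding real_differentiable_def by auto
    obtain l z where z: "0 < z" "z < t" and dz: "DERIV H z :> l" and eq: "H t - H 0 = (t - 0) * l"
      using MVT[OF t0 cH dfH] by blast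
    have zT: "z \<in> {0<..<T}" using z t by auto
    have "l = exp (- C * z) * (- C) * fs.F z + (- fs.G z) * exp (- C * z)"
      using DERIV_unique[OF dz dH[OF zT]] .
    then have "l \<le> 0" using dHle[OF zT] by simp
    then have "t * l \<le> 0" using t0 by (simp add: mult_nonneg_nonpos)
    then have "H t \<le> H 0" using eq by simp
    then have "exp (- C * t) * fs.F t \<le> 0" unfolding H_def using F0 by simp
    then show ?thesis by (simp add: mult_le_0_iff)
  qed
  have i1: "(\<lambda>x. qf (u t x)) integrable_on {0..L}"
    by (rule integrable_continuous_real) (rule cont_slice[OF fs.cPu t])
  have Ft_ge: "0 \<le> fs.F t" unfolding fs.F_def by (rule integral_nonneg[OF i1]) (rule qf_nonneg)
  have hi: "((\<lambda>x. qf (u t x)) has_integral 0) (cbox 0 L)"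
    using integrable_integral[OF i1] Ft_le Ft_ge unfolding fs.F_def by (simp add: box_real)
  have "qf (u t x) = 0"
  proof (rule has_integral_0_cbox_imp_0[OF _ _ hi])
    show "continuous_on (cbox 0 L) (\<lambda>x. qf (u t x))" using cont_slice[OF fs.cPu t] by (simp add: box_real)
    show "\<And>x. x \<in> box 0 L \<Longrightarrow> 0 \<le> qf (u t x)" by (rule qf_nonneg)
    show "box 0 L \<noteq> {}" using fs.L by (simp add: box_real)
    show "x \<in> cbox 0 L" using x by (simp add: box_real)
  qed
  then show ?thesis by (simp add: min_def split: if_splits)
qed


lemma cont_snd:
  fixes g :: "real \<Rightarrow> real"
  assumes "continuous_on B g"
  shows "continuous_on (A \<times> B) (\<lambda>(t,x). g x)"
proof -
  have "continuous_on (A \<times> B) (\<lambda>z. g (snd z))"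
    by (rule continuous_on_compose2[OF assms continuous_on_snd]) auto
  then show ?thesis by (simp add: case_prod_beta)
qed

definition beF :: "real \<Rightarrow> real" where "beF a = 1 - a * (1 - a) / 2"
definition C2F :: "real \<Rightarrow> real \<Rightarrow> real" where "C2F L \<kappa> = (L + 2) / L + (\<kappa> + L + 2) / 2"
definition gmF :: "real \<Rightarrow> real" where "gmF a = (beF a - a) / (a + beF a)"
definition K0F :: "real \<Rightarrow> real \<Rightarrow> real \<Rightarrow> real \<Rightarrow> real" where "K0F L a \<kappa> l = (l\<^sup>2 * \<kappa> / 2) * (L + 2) * ((C2F L \<kappa>)\<^sup>2) powr gmF a"
definition K1F :: "real \<Rightarrow> real \<Rightarrow> real \<Rightarrow> real \<Rightarrow> real" where "K1F L a \<kappa> l = 1/4 + K0F L a \<kappa> l * (1 + (4 * K0F L a \<kappa> l) powr (1 / (1 - gmF a)))"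
definition BDF :: "real \<Rightarrow> real \<Rightarrow> real \<Rightarrow> real \<Rightarrow> real \<Rightarrow> real" where "BDF L T a \<kappa> l = 4 * (L + 2) / (beF a * (1 - beF a)) + 4 * K1F L a \<kappa> l * T"
definition BF :: "real \<Rightarrow> real \<Rightarrow> real \<Rightarrow> real \<Rightarrow> real \<Rightarrow> real" where "BF L T a \<kappa> l = (\<kappa> + (C2F L \<kappa>)\<^sup>2 * (L + 2)) * BDF L T a \<kappa> l + (C2F L \<kappa>)\<^sup>2 * (L + 2) * T"

lemma beF_props:
  assumes "0 < a" "a < 1"
  shows "a \<le> beF a" "beF a < 1" "1 < a + beF a" "0 < beF a"
proof -
  have "0 < a * (1 - a)" using assms by (intro mult_pos_pos) auto
  moreover have "a * (1 - a) < 1" using assms by (smt (verit) mult_less_cancel_left2)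
  ultimately show "beF a < 1" "0 < beF a" unfolding beF_def by auto
  have "0 \<le> (1 - a) * (1 - a/2)" using assms by (intro mult_nonneg_nonneg) auto
  then show "a \<le> beF a" unfolding beF_def by (simp add: algebra_simps)
  have "0 < a * (1 + a)" using assms by (intro mult_pos_pos) auto
  then show "1 < a + beF a" unfolding beF_def by (simp add: algebra_simps)
qed

locale msol =
  fixes L T a \<kappa> l \<eta> :: real
    and f2 V1' V2' :: "real \<Rightarrow> real"
    and \<rho>1 \<rho>2 \<rho>1x \<rho>2x \<rho>1t \<rho>2t :: "real \<Rightarrow> real \<Rightarrow> real"
  assumes L: "0 < L" and T: "0 < T" and a: "0 < a" "a < 1" and k: "0 < \<kappa>" and l: "0 \<le> l"
    and eta: "0 < \<eta>"
    and cf2: "continuous_on {0<..} f2"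
    and f2lb: "\<And>s. 0 < s \<Longrightarrow> min (s powr a) s / \<kappa> \<le> s\<^sup>2 * f2 s"
    and c1: "continuous_on ({0..T}\<times>{0..L}) (\<lambda>(t,x). \<rho>1 t x)"
    and c1x: "continuous_on ({0..T}\<times>{0..L}) (\<lambda>(t,x). \<rho>1x t x)"
    and c1t: "continuous_on ({0..T}\<times>{0..L}) (\<lambda>(t,x). \<rho>1t t x)"
    and c2: "continuous_on ({0..T}\<times>{0..L}) (\<lambda>(t,x). \<rho>2 t x)"
    and c2x: "continuous_on ({0..T}\<times>{0..L}) (\<lambda>(t,x). \<rho>2x t x)"
    and c2t: "continuous_on ({0..T}\<times>{0..L}) (\<lambda>(t,x). \<rho>2t t x)"
    and d1x: "\<And>t x. t \<in> {0..T} \<Longrightarrow> x \<in> {0..L} \<Longrightarrow> (\<rho>1 t has_real_derivative \<rho>1x t x) (at x within {0..L})"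
    and d2x: "\<And>t x. t \<in> {0..T} \<Longrightarrow> x \<in> {0..L} \<Longrightarrow> (\<rho>2 t has_real_derivative \<rho>2x t x) (at x within {0..L})"
    and d1t: "\<And>t x. t \<in> {0..T} \<Longrightarrow> x \<in> {0..L} \<Longrightarrow> ((\<lambda>s. \<rho>1 s x) has_real_derivative \<rho>1t t x) (at t within {0..T})"
    and d2t: "\<And>t x. t \<in> {0..T} \<Longrightarrow> x \<in> {0..L} \<Longrightarrow> ((\<lambda>s. \<rho>2 s x) has_real_derivative \<rho>2t t x) (at t within {0..T})"
    and dJ1: "\<And>t x. t \<in> {0<..<T} \<Longrightarrow> x \<in> {0<..<L} \<Longrightarrow>
      ((\<lambda>x. \<eta> * \<rho>1x t x + \<rho>1 t x * (f2 (\<rho>1 t x + \<rho>2 t x) * (\<rho>1x t x + \<rho>2x t x) + V1' x))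
        has_real_derivative \<rho>1t t x) (at x)"
    and dJ2: "\<And>t x. t \<in> {0<..<T} \<Longrightarrow> x \<in> {0<..<L} \<Longrightarrow>
      ((\<lambda>x. \<eta> * \<rho>2x t x + \<rho>2 t x * (f2 (\<rho>1 t x + \<rho>2 t x) * (\<rho>1x t x + \<rho>2x t x) + V2' x))
        has_real_derivative \<rho>2t t x) (at x)"
    and Jb1: "\<And>t. t \<in> {0<..<T} \<Longrightarrow>
      (\<eta> * \<rho>1x t 0 + \<rho>1 t 0 * (f2 (\<rho>1 t 0 + \<rho>2 t 0) * (\<rho>1x t 0 + \<rho>2x t 0) + V1' 0) = 0) \<and>
      (\<eta> * \<rho>1x t L + \<rho>1 t L * (f2 (\<rho>1 t L + \<rho>2 t L) * (\<rho>1x t L + \<rho>2x t L) + V1' L) = 0)"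
    and Jb2: "\<And>t. t \<in> {0<..<T} \<Longrightarrow>
      (\<eta> * \<rho>2x t 0 + \<rho>2 t 0 * (f2 (\<rho>1 t 0 + \<rho>2 t 0) * (\<rho>1x t 0 + \<rho>2x t 0) + V2' 0) = 0) \<and>
      (\<eta> * \<rho>2x t L + \<rho>2 t L * (f2 (\<rho>1 t L + \<rho>2 t L) * (\<rho>1x t L + \<rho>2x t L) + V2' L) = 0)"
    and cV1: "continuous_on {0..L} V1'" and bV1: "\<And>x. x \<in> {0..L} \<Longrightarrow> \<bar>V1' x\<bar> \<le> l"
    and cV2: "continuous_on {0..L} V2'" and bV2: "\<And>x. x \<in> {0..L} \<Longrightarrow> \<bar>V2' x\<bar> \<le> l"
    and pos: "\<And>t x. t \<in> {0..T} \<Longrightarrow> x \<in> {0..L} \<Longrightarrow> 0 < \<rho>1 t x + \<rho>2 t x"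
    and init1: "\<And>x. x \<in> {0..L} \<Longrightarrow> 0 \<le> \<rho>1 0 x"
    and init2: "\<And>x. x \<in> {0..L} \<Longrightarrow> 0 \<le> \<rho>2 0 x"
    and mass0: "integral {0..L} (\<lambda>x. \<rho>1 0 x + \<rho>2 0 x) = 2"
begin

definition "J1 = (\<lambda>t x. \<eta> * \<rho>1x t x + \<rho>1 t x * (f2 (\<rho>1 t x + \<rho>2 t x) * (\<rho>1x t x + \<rho>2x t x) + V1' x))"
definition "J2 = (\<lambda>t x. \<eta> * \<rho>2x t x + \<rho>2 t x * (f2 (\<rho>1 t x + \<rho>2 t x) * (\<rho>1x t x + \<rho>2x t x) + V2' x))"
definition "bb1 = (\<lambda>t x. f2 (\<rho>1 t x + \<rho>2 t x) * (\<rho>1x t x + \<rho>2x t x) + V1' x)"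
definition "bb2 = (\<lambda>t x. f2 (\<rho>1 t x + \<rho>2 t x) * (\<rho>1x t x + \<rho>2x t x) + V2' x)"

lemma csg: "continuous_on ({0..T}\<times>{0..L}) (\<lambda>(t,x). \<rho>1 t x + \<rho>2 t x)"
  by (rule cont_add2[OF c1 c2])
lemma csgx: "continuous_on ({0..T}\<times>{0..L}) (\<lambda>(t,x). \<rho>1x t x + \<rho>2x t x)"
  by (rule cont_add2[OF c1x c2x])
lemma csgt: "continuous_on ({0..T}\<times>{0..L}) (\<lambda>(t,x). \<rho>1t t x + \<rho>2t t x)"
  by (rule cont_add2[OF c1t c2t])
lemma cF2: "continuous_on ({0..T}\<times>{0..L}) (\<lambda>(t,x). f2 (\<rho>1 t x + \<rho>2 t x))"
  by (rule cont_comp2[OF cf2 csg]) (use pos in auto)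
lemma cbb1: "continuous_on ({0..T}\<times>{0..L}) (\<lambda>(t,x). bb1 t x)"
  unfolding bb1_def by (intro cont_add2 cont_mult2 cF2 csgx cont_snd cV1)
lemma cbb2: "continuous_on ({0..T}\<times>{0..L}) (\<lambda>(t,x). bb2 t x)"
  unfolding bb2_def by (intro cont_add2 cont_mult2 cF2 csgx cont_snd cV2)
lemma J1bb: "J1 t x = \<eta> * \<rho>1x t x + \<rho>1 t x * bb1 t x" unfolding J1_def bb1_def by simp
lemma J2bb: "J2 t x = \<eta> * \<rho>2x t x + \<rho>2 t x * bb2 t x" unfolding J2_def bb2_def by simp
lemma cJ1: "continuous_on ({0..T}\<times>{0..L}) (\<lambda>(t,x). J1 t x)"
  unfolding J1bb by (intro cont_add2 cont_mult2 c1 c1x cbb1 cont_snd continuous_on_const)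
lemma cJ2: "continuous_on ({0..T}\<times>{0..L}) (\<lambda>(t,x). J2 t x)"
  unfolding J2bb by (intro cont_add2 cont_mult2 c2 c2x cbb2 cont_snd continuous_on_const)

lemma fs1: "fluxsys L T \<rho>1 \<rho>1x \<rho>1t J1 UNIV qf qf1 qf2"
  by (unfold_locales) (use L T c1 c1x c1t cJ1 d1x d1t dJ1 Jb1 qf_derivs in \<open>auto simp: J1_def\<close>)
lemma fs2: "fluxsys L T \<rho>2 \<rho>2x \<rho>2t J2 UNIV qf qf1 qf2"
  by (unfold_locales) (use L T c2 c2x c2t cJ2 d2x d2t dJ2 Jb2 qf_derivs in \<open>auto simp: J2_def\<close>)

lemma nn1: "t \<in> {0..T} \<Longrightarrow> x \<in> {0..L} \<Longrightarrow> 0 \<le> \<rho>1 t x"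
  by (rule nonneg_gen[OF fs1 _ cbb1 eta init1]) (auto simp: J1bb)
lemma nn2: "t \<in> {0..T} \<Longrightarrow> x \<in> {0..L} \<Longrightarrow> 0 \<le> \<rho>2 t x"
  by (rule nonneg_gen[OF fs2 _ cbb2 eta init2]) (auto simp: J2bb)

lemma fsm: "fluxsys L T (\<lambda>t x. \<rho>1 t x + \<rho>2 t x) (\<lambda>t x. \<rho>1x t x + \<rho>2x t x)
   (\<lambda>t x. \<rho>1t t x + \<rho>2t t x) (\<lambda>t x. J1 t x + J2 t x) UNIV (\<lambda>r. r) (\<lambda>r. 1) (\<lambda>r. 0)"
proof (unfold_locales)
  show "continuous_on ({0..T}\<times>{0..L}) (\<lambda>(t,x). J1 t x + J2 t x)" by (rule cont_add2[OF cJ1 cJ2])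
  fix t x assume t: "t \<in> {0..T}" and x: "x \<in> {0..L}"
  show "((\<lambda>x. \<rho>1 t x + \<rho>2 t x) has_real_derivative \<rho>1x t x + \<rho>2x t x) (at x within {0..L})"
    by (rule DERIV_add[OF d1x[OF t x] d2x[OF t x]])
  show "((\<lambda>s. \<rho>1 s x + \<rho>2 s x) has_real_derivative \<rho>1t t x + \<rho>2t t x) (at t within {0..T})"
    by (rule DERIV_add[OF d1t[OF t x] d2t[OF t x]])
next
  fix t x assume t: "t \<in> {0<..<T}" and x: "x \<in> {0<..<L}"
  show "((\<lambda>x. J1 t x + J2 t x) has_real_derivative \<rho>1t t x + \<rho>2t t x) (at x)"
    unfolding J1_def J2_def by (rule DERIV_add[OF dJ1[OF t x] dJ2[OF t x]])
next
  fix t assume t: "t \<in> {0<..<T}"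
  show "J1 t 0 + J2 t 0 = 0 \<and> J1 t L + J2 t L = 0" using Jb1[OF t] Jb2[OF t] unfolding J1_def J2_def by simp
qed (use L T csg csgx csgt in \<open>auto intro: DERIV_ident DERIV_const\<close>)

lemma mass: assumes t: "t \<in> {0..T}" shows "integral {0..L} (\<lambda>x. \<rho>1 t x + \<rho>2 t x) = 2"
proof -
  interpret m: fluxsys L T "\<lambda>t x. \<rho>1 t x + \<rho>2 t x" "\<lambda>t x. \<rho>1x t x + \<rho>2x t x"
    "\<lambda>t x. \<rho>1t t x + \<rho>2t t x" "\<lambda>t x. J1 t x + J2 t x" UNIV "\<lambda>r. r" "\<lambda>r. 1" "\<lambda>r. 0"
    by (rule fsm)
  have G0: "m.G s = 0" for s unfolding m.G_def by simp
  have "m.F t - m.F 0 = 0"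
  proof (cases "t = 0")
    case True then show ?thesis by simp
  next
    case False
    have h: "((\<lambda>s. - m.G s) has_integral m.F t - m.F 0) {0..t}" by (rule m.FTC_sub) (use t in auto)
    then have "((\<lambda>s. 0) has_integral m.F t - m.F 0) {0..t}" using G0 by simp
    then have "integral {0..t} (\<lambda>s. 0) = m.F t - m.F 0" by (rule integral_unique)
    then show ?thesis by simp
  qed
  then show ?thesis using mass0 unfolding m.F_def by simp
qed

end


context msol
begin

abbreviation "be \<equiv> beF a"
lemma be: "a \<le> be" "be < 1" "1 < a + be" "0 < be" using beF_props[OF a] by auto

lemma f2pos: assumes s: "0 < s" shows "0 < f2 s"
proof -
  have "0 < min (s powr a) s / \<kappa>" using s k by simp
  then have "0 < s\<^sup>2 * f2 s" using f2lb[OF s] by linarith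
  then show ?thesis using s by (simp add: zero_less_mult_iff)
qed

definition "dd t x = (\<rho>1 t x + \<rho>2 t x) powr (be - 1) * f2 (\<rho>1 t x + \<rho>2 t x) * (\<rho>1x t x + \<rho>2x t x)\<^sup>2"
definition "D t = integral {0..L} (dd t)"

lemma cdd: "continuous_on ({0..T}\<times>{0..L}) (\<lambda>(t,x). dd t x)"
proof -
  have c: "continuous_on {0<..} (\<lambda>s::real. s powr (be - 1))" by (intro continuous_intros) auto
  have "continuous_on ({0..T}\<times>{0..L}) (\<lambda>(t,x). (\<rho>1 t x + \<rho>2 t x) powr (be - 1))"
    by (rule cont_comp2[OF c csg]) (use pos in auto)
  then show ?thesis unfolding dd_def power2_eq_square by (intro cont_mult2 cF2 csgx)
qed

lemma dd_nonneg: "t \<in> {0..T} \<Longrightarrow> x \<in> {0..L} \<Longrightarrow> 0 \<le> dd t x"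
  unfolding dd_def using pos f2pos by (simp add: less_imp_le)

lemma ddi: "t \<in> {0..T} \<Longrightarrow> (dd t has_integral D t) {0..L}"
  unfolding D_def by (rule integrable_integral, rule integrable_continuous_real, rule cont_slice[OF cdd])

lemma D_nonneg: "t \<in> {0..T} \<Longrightarrow> 0 \<le> D t"
  unfolding D_def by (rule integral_nonneg) (use ddi dd_nonneg in auto)

lemma sgi: "t \<in> {0..T} \<Longrightarrow> ((\<lambda>x. 1 + (\<rho>1 t x + \<rho>2 t x)) has_integral L + 2) {0..L}"
proof -
  assume t: "t \<in> {0..T}"
  have i: "(\<lambda>x. \<rho>1 t x + \<rho>2 t x) integrable_on {0..L}"
    by (rule integrable_continuous_real, rule cont_slice[OF csg t])
  have "((\<lambda>x. \<rho>1 t x + \<rho>2 t x) has_integral 2) {0..L}" using integrable_integral[OF i] mass[OF t] by simp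
  from has_integral_add[OF has_integral_const_real[of 1 0 L] this] show ?thesis using L by simp
qed

lemma supb:
  assumes t: "t \<in> {0..T}" and x: "x \<in> {0..L}"
  shows "(1 + (\<rho>1 t x + \<rho>2 t x)) powr (a + be) \<le> (C2F L \<kappa>)\<^sup>2 * (D t + 1)"
proof -
  define e where "e = (a + be) / 2"
  have e0: "0 < e" "e \<le> 1" using be a unfolding e_def by auto
  define s where "s y = \<rho>1 t y + \<rho>2 t y" for y
  define p where "p y = \<rho>1x t y + \<rho>2x t y" for y
  define w where "w y = (1 + s y) powr e" for y
  define w' where "w' y = e * (1 + s y) powr (e - 1) * p y" for y
  have spos: "0 < s y" if "y \<in> {0..L}" for y using pos[OF t that] by (simp add: s_def)
  have dw: "(w has_real_derivative w' y) (at y within {0..L})" if y: "y \<in> {0..L}" for y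
  proof -
    have d1: "((\<lambda>y. 1 + s y) has_real_derivative 0 + p y) (at y within {0..L})"
      unfolding s_def p_def by (intro DERIV_add DERIV_const d1x[OF t y] d2x[OF t y])
    have dp: "((\<lambda>z. z powr e) has_real_derivative e * (1 + s y) powr (e - 1)) (at (1 + s y))"
      by (rule has_real_derivative_powr) (use spos[OF y] in simp)
    show ?thesis using DERIV_chain2[OF dp d1] unfolding w_def w'_def by simp
  qed
  have cw: "continuous_on {0..L} w" by (rule DERIV_continuous_on[OF dw])
  have sp2: "0 < 1 + (\<rho>1 t y + \<rho>2 t y)" if "0 \<le> y" "y \<le> L" for y
    using spos[of y] that by (simp add: s_def)
  have cw': "continuous_on {0..L} w'"
    unfolding w'_def s_def p_def
    by (intro continuous_intros cont_slice[OF c1 t] cont_slice[OF c2 t] cont_slice[OF c1x t] cont_slice[OF c2x t])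
      (use sp2 in fastforce)+
  have se: "L * w x \<le> integral {0..L} w + L * integral {0..L} (\<lambda>y. \<bar>w' y\<bar>)"
    by (rule sup_est[OF L cw cw' dw x])
  have hs: "((\<lambda>y. 1 + s y) has_integral L + 2) {0..L}" using sgi[OF t] unfolding s_def .
  have iw: "integral {0..L} w \<le> L + 2"
  proof -
    have "integral {0..L} w \<le> integral {0..L} (\<lambda>y. 1 + s y)"
    proof (rule integral_le)
      show "w integrable_on {0..L}" by (rule integrable_continuous_real[OF cw])
      show "(\<lambda>y. 1 + s y) integrable_on {0..L}" using hs by blast
      fix y assume y: "y \<in> {0..L}"
      have "(1 + s y) powr e \<le> (1 + s y) powr 1" by (rule powr_mono) (use e0 spos[OF y] in auto)
      then show "w y \<le> 1 + s y" unfolding w_def using spos[OF y] by simp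
    qed
    then show ?thesis using integral_unique[OF hs] by simp
  qed
  define lam where "lam = sqrt (D t + 1)"
  have D0: "0 \<le> D t" by (rule D_nonneg[OF t])
  have lam1: "1 \<le> lam" unfolding lam_def using D0 by simp
  have lam2: "lam\<^sup>2 = D t + 1" unfolding lam_def using D0 by simp
  have iw': "integral {0..L} (\<lambda>y. \<bar>w' y\<bar>) \<le> (e * \<kappa> / (2 * lam)) * D t + (e * lam / 2) * (L + 2)"
  proof -
    have hr: "((\<lambda>y. (e * \<kappa> / (2 * lam)) * dd t y + (e * lam / 2) * (1 + s y)) has_integral
        (e * \<kappa> / (2 * lam)) * D t + (e * lam / 2) * (L + 2)) {0..L}"
      by (intro has_integral_add has_integral_mult_right ddi[OF t] hs)
    have "integral {0..L} (\<lambda>y. \<bar>w' y\<bar>) \<le> integral {0..L} (\<lambda>y. (e * \<kappa> / (2 * lam)) * dd t y + (e * lam / 2) * (1 + s y))"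
    proof (rule integral_le)
      show "(\<lambda>y. \<bar>w' y\<bar>) integrable_on {0..L}" by (rule integrable_continuous_real) (intro continuous_intros cw')
      show "(\<lambda>y. (e * \<kappa> / (2 * lam)) * dd t y + (e * lam / 2) * (1 + s y)) integrable_on {0..L}" using hr by blast
      fix y assume y: "y \<in> {0..L}"
      have v: "0 < f2 (s y)" by (rule f2pos[OF spos[OF y]])
      have p4: "(1 + s y) powr ((a + be) / 2 - 1) * \<bar>p y\<bar> \<le>
          (\<kappa> * (s y powr (be - 1) * f2 (s y) * (p y)\<^sup>2) / lam + lam * (1 + s y)) / 2"
        by (rule pw4[OF spos[OF y] v f2lb[OF spos[OF y]] a k be(1) be(2)]) (use lam1 in simp)
      have "\<bar>w' y\<bar> = e * ((1 + s y) powr ((a + be) / 2 - 1) * \<bar>p y\<bar>)"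
        unfolding w'_def e_def using e0 by (simp add: abs_mult e_def)
      also have "\<dots> \<le> e * ((\<kappa> * (s y powr (be - 1) * f2 (s y) * (p y)\<^sup>2) / lam + lam * (1 + s y)) / 2)"
        by (rule mult_left_mono[OF p4]) (use e0 in simp)
      also have "\<dots> = (e * \<kappa> / (2 * lam)) * dd t y + (e * lam / 2) * (1 + s y)"
        unfolding dd_def s_def p_def using lam1 by (simp add: field_simps)
      finally show "\<bar>w' y\<bar> \<le> (e * \<kappa> / (2 * lam)) * dd t y + (e * lam / 2) * (1 + s y)" .
    qed
    then show ?thesis using integral_unique[OF hr] by simp
  qed
  have Dl: "D t / lam \<le> lam"
  proof -
    have "D t \<le> lam * lam" using lam2 by (simp add: power2_eq_square)
    then show ?thesis using lam1 by (simp add: divide_le_eq)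
  qed
  have "L * w x \<le> (L + 2) + L * ((e * \<kappa> / (2 * lam)) * D t + (e * lam / 2) * (L + 2))"
    using se iw mult_left_mono[OF iw', of L] L by linarith
  then have wx: "w x \<le> (L + 2) / L + ((e * \<kappa> / (2 * lam)) * D t + (e * lam / 2) * (L + 2))"
    using L by (simp add: field_simps)
  have "(e * \<kappa> / (2 * lam)) * D t = (e * \<kappa> / 2) * (D t / lam)" by simp
  also have "\<dots> \<le> (e * \<kappa> / 2) * lam" by (rule mult_left_mono[OF Dl]) (use e0 k in simp)
  finally have t1: "(e * \<kappa> / (2 * lam)) * D t \<le> (e * \<kappa> / 2) * lam" .
  have eqn: "(e / 2) * (\<kappa> + L + 2) * lam = (e * \<kappa> / 2) * lam + (e * lam / 2) * (L + 2)"
    by (simp add: field_simps)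
  have "w x \<le> (L + 2) / L + (e / 2) * (\<kappa> + L + 2) * lam" using wx t1 eqn by linarith
  also have "\<dots> \<le> (L + 2) / L * lam + (1 / 2) * (\<kappa> + L + 2) * lam"
  proof -
    have "(L + 2) / L * 1 \<le> (L + 2) / L * lam" using lam1 L by (intro mult_left_mono) auto
    moreover have "(e / 2) * (\<kappa> + L + 2) * lam \<le> (1 / 2) * (\<kappa> + L + 2) * lam"
      using e0 k L lam1 by (intro mult_right_mono) auto
    ultimately show ?thesis by linarith
  qed
  also have "\<dots> = C2F L \<kappa> * lam" unfolding C2F_def by (simp add: algebra_simps)
  finally have wx2: "w x \<le> C2F L \<kappa> * lam" .
  have w0: "0 \<le> w x" unfolding w_def by simp
  have "(w x)\<^sup>2 \<le> (C2F L \<kappa> * lam)\<^sup>2" by (rule power_mono[OF wx2 w0])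
  also have "\<dots> = (C2F L \<kappa>)\<^sup>2 * (D t + 1)" using lam2 by (simp add: power_mult_distrib)
  also have "(w x)\<^sup>2 = (1 + s x) powr (a + be)"
  proof -
    have "(w x)\<^sup>2 = (1 + s x) powr e * (1 + s x) powr e" unfolding w_def by (simp add: power2_eq_square)
    also have "\<dots> = (1 + s x) powr (e + e)" by (rule powr_add[symmetric])
    finally show ?thesis unfolding e_def by simp
  qed
  finally show ?thesis unfolding s_def .
qed

end


context msol
begin

definition "hh = (\<lambda>s::real. - (s powr be) / (be * (1 - be)))"
definition "hh1 = (\<lambda>s::real. - (s powr (be - 1)) / (1 - be))"
definition "hh2 = (\<lambda>s::real. s powr (be - 2))"

lemma fse: "fluxsys L T (\<lambda>t x. \<rho>1 t x + \<rho>2 t x) (\<lambda>t x. \<rho>1x t x + \<rho>2x t x)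
   (\<lambda>t x. \<rho>1t t x + \<rho>2t t x) (\<lambda>t x. J1 t x + J2 t x) {0<..} hh hh1 hh2"
proof (unfold_locales)
  show "continuous_on ({0..T}\<times>{0..L}) (\<lambda>(t,x). J1 t x + J2 t x)" by (rule cont_add2[OF cJ1 cJ2])
  fix t x assume t: "t \<in> {0..T}" and x: "x \<in> {0..L}"
  show "((\<lambda>x. \<rho>1 t x + \<rho>2 t x) has_real_derivative \<rho>1x t x + \<rho>2x t x) (at x within {0..L})"
    by (rule DERIV_add[OF d1x[OF t x] d2x[OF t x]])
  show "((\<lambda>s. \<rho>1 s x + \<rho>2 s x) has_real_derivative \<rho>1t t x + \<rho>2t t x) (at t within {0..T})"
    by (rule DERIV_add[OF d1t[OF t x] d2t[OF t x]])
  show "\<rho>1 t x + \<rho>2 t x \<in> {0<..}" using pos[OF t x] by simp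
next
  fix t x assume t: "t \<in> {0<..<T}" and x: "x \<in> {0<..<L}"
  show "((\<lambda>x. J1 t x + J2 t x) has_real_derivative \<rho>1t t x + \<rho>2t t x) (at x)"
    unfolding J1_def J2_def by (rule DERIV_add[OF dJ1[OF t x] dJ2[OF t x]])
next
  fix t assume t: "t \<in> {0<..<T}"
  show "J1 t 0 + J2 t 0 = 0 \<and> J1 t L + J2 t L = 0" using Jb1[OF t] Jb2[OF t] unfolding J1_def J2_def by simp
next
  fix y :: real assume y: "y \<in> {0<..}"
  then have y0: "0 < y" by simp
  have b0: "be \<noteq> 0" "1 - be \<noteq> 0" using be by auto
  have "((\<lambda>s. - (s powr be) / (be * (1 - be))) has_real_derivative - (be * y powr (be - 1)) / (be * (1 - be))) (at y)"
    by (rule DERIV_cdivide[OF DERIV_minus[OF has_real_derivative_powr[OF y0]]])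
  then show "(hh has_real_derivative hh1 y) (at y)" unfolding hh_def hh1_def using b0 by simp
  have "((\<lambda>s. - (s powr (be - 1)) / (1 - be)) has_real_derivative - ((be - 1) * y powr (be - 1 - 1)) / (1 - be)) (at y)"
    by (rule DERIV_cdivide[OF DERIV_minus[OF has_real_derivative_powr[OF y0]]])
  moreover have "- ((be - 1) * y powr (be - 1 - 1)) / (1 - be) = y powr (be - 2)"
    using b0 by (simp add: field_simps)
  ultimately show "(hh1 has_real_derivative hh2 y) (at y)" unfolding hh1_def hh2_def by simp
next
  show "continuous_on {0<..} hh2" unfolding hh2_def by (intro continuous_intros) auto
qed (use L T csg csgx csgt in auto)

end

sublocale msol \<subseteq> es: fluxsys L T "\<lambda>t x. \<rho>1 t x + \<rho>2 t x" "\<lambda>t x. \<rho>1x t x + \<rho>2x t x"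
   "\<lambda>t x. \<rho>1t t x + \<rho>2t t x" "\<lambda>t x. J1 t x + J2 t x" "{0<..}" hh hh1 hh2
  by (rule fse)

context msol
begin

lemma Gbound: assumes t: "t \<in> {0..T}" shows "D t / 4 - K1F L a \<kappa> l \<le> es.G t"
proof -
  define gm where "gm = gmF a"
  have gm: "0 \<le> gm" "gm < 1" unfolding gm_def gmF_def using be a by (auto simp: divide_less_eq)
  define C2 where "C2 = C2F L \<kappa>"
  define s where "s x = \<rho>1 t x + \<rho>2 t x" for x
  define p where "p x = \<rho>1x t x + \<rho>2x t x" for x
  have spos: "0 < s y" if "y \<in> {0..L}" for y using pos[OF t that] by (simp add: s_def)
  have D0: "0 \<le> D t" by (rule D_nonneg[OF t])
  have pw: "hh2 (s y) * p y * (J1 t y + J2 t y) \<ge>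
      dd t y / 2 - (l\<^sup>2 * \<kappa> / 2) * ((C2\<^sup>2) powr gm * (D t + 1) powr gm) * (1 + s y)"
    if y: "y \<in> {0..L}" for y
  proof -
    define P where "P = \<rho>1 t y * V1' y + \<rho>2 t y * V2' y"
    have JJ: "J1 t y + J2 t y = \<eta> * p y + s y * f2 (s y) * p y + P"
      unfolding J1_def J2_def P_def s_def p_def by (simp add: algebra_simps)
    have "\<bar>P\<bar> \<le> \<rho>1 t y * l + \<rho>2 t y * l"
    proof -
      have "\<bar>\<rho>1 t y * V1' y\<bar> \<le> \<rho>1 t y * l"
        using nn1[OF t y] bV1[OF y] by (simp add: abs_mult mult_left_mono)
      moreover have "\<bar>\<rho>2 t y * V2' y\<bar> \<le> \<rho>2 t y * l"
        using nn2[OF t y] bV2[OF y] by (simp add: abs_mult mult_left_mono)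
      ultimately show ?thesis unfolding P_def by linarith
    qed
    then have Pb: "\<bar>P\<bar> \<le> l * s y" unfolding s_def by (simp add: algebra_simps)
    have v: "0 < f2 (s y)" by (rule f2pos[OF spos[OF y]])
    have p5: "hh2 (s y) * p y * (J1 t y + J2 t y) \<ge> dd t y / 2 - (l\<^sup>2 * \<kappa> / 2) * (1 + s y) powr (be + 1 - a)"
      using pw5[OF spos[OF y] v f2lb[OF spos[OF y]] a k be(1) be(2) less_imp_le[OF eta] Pb, of "p y"]
      unfolding JJ hh2_def dd_def s_def p_def by (simp add: algebra_simps)
    have sb: "(1 + s y) powr (a + be) \<le> C2\<^sup>2 * (D t + 1)" using supb[OF t y] unfolding C2_def s_def .
    have "(1 + s y) powr (be + 1 - a) = (1 + s y) * ((1 + s y) powr (a + be)) powr gm"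
    proof -
      have "((1 + s y) powr (a + be)) powr gm = (1 + s y) powr ((a + be) * gm)" by (rule powr_powr)
      also have "(a + be) * gm = be - a" unfolding gm_def gmF_def using be a by (simp add: field_simps)
      finally have e1: "((1 + s y) powr (a + be)) powr gm = (1 + s y) powr (be - a)" .
      have "(1 + s y) powr (be + 1 - a) = (1 + s y) powr (1 + (be - a))" by (simp add: algebra_simps)
      also have "\<dots> = (1 + s y) powr 1 * (1 + s y) powr (be - a)" by (rule powr_add)
      finally show ?thesis using e1 spos[OF y] by simp
    qed
    also have "\<dots> \<le> (1 + s y) * (C2\<^sup>2 * (D t + 1)) powr gm"
      by (rule mult_left_mono[OF powr_mono2[OF gm(1) _ sb]]) (use spos[OF y] in auto)
    also have "\<dots> = (1 + s y) * ((C2\<^sup>2) powr gm * (D t + 1) powr gm)" using D0 by (simp add: powr_mult)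
    finally have q: "(1 + s y) powr (be + 1 - a) \<le> (1 + s y) * ((C2\<^sup>2) powr gm * (D t + 1) powr gm)" .
    have "(l\<^sup>2 * \<kappa> / 2) * (1 + s y) powr (be + 1 - a) \<le> (l\<^sup>2 * \<kappa> / 2) * ((1 + s y) * ((C2\<^sup>2) powr gm * (D t + 1) powr gm))"
      by (rule mult_left_mono[OF q]) (use k in simp)
    moreover have "(l\<^sup>2 * \<kappa> / 2) * ((C2\<^sup>2) powr gm * (D t + 1) powr gm) * (1 + s y) =
        (l\<^sup>2 * \<kappa> / 2) * ((1 + s y) * ((C2\<^sup>2) powr gm * (D t + 1) powr gm))" by (simp only: mult_ac)
    ultimately show ?thesis using p5 by linarith
  qed
  define M where "M = (l\<^sup>2 * \<kappa> / 2) * ((C2\<^sup>2) powr gm * (D t + 1) powr gm)"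
  have hg: "((\<lambda>y. hh2 (s y) * p y * (J1 t y + J2 t y)) has_integral es.G t) {0..L}"
    unfolding es.G_def s_def p_def
    by (rule integrable_integral, rule integrable_continuous_real) (use cont_slice[OF es.cg t] in simp)
  have hr: "((\<lambda>y. dd t y / 2 - M * (1 + s y)) has_integral D t / 2 - M * (L + 2)) {0..L}"
    using has_integral_diff[OF has_integral_mult_left[OF ddi[OF t], of "1/2"] has_integral_mult_right[OF sgi[OF t], of M]]
    unfolding s_def by simp
  have f1: "D t / 2 - M * (L + 2) \<le> es.G t"
    using has_integral_le[OF hr hg] pw unfolding M_def by (simp add: algebra_simps)
  have f2: "M * (L + 2) = K0F L a \<kappa> l * (D t + 1) powr gm"
    unfolding M_def K0F_def C2_def gm_def by (simp add: algebra_simps)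
  have f3: "K0F L a \<kappa> l * (D t + 1) powr gm \<le> (D t + 1) / 4 + K0F L a \<kappa> l * (1 + (4 * K0F L a \<kappa> l) powr (1 / (1 - gm)))"
    by (rule absorb[OF _ gm]) (use D0 l k L in \<open>auto simp: K0F_def\<close>)
  have f4: "D t / 2 - K0F L a \<kappa> l * (D t + 1) powr gm \<le> es.G t" using f1 f2 by linarith
  have f5: "D t / 2 - ((D t + 1) / 4 + K0F L a \<kappa> l * (1 + (4 * K0F L a \<kappa> l) powr (1 / (1 - gm)))) \<le> es.G t"
    using f4 f3 by linarith
  show ?thesis unfolding K1F_def gm_def[symmetric] using f5 by (simp add: field_simps)
qed

end


lemma lin1: fixes x y c :: real shows "x \<le> 0 \<Longrightarrow> - c \<le> y \<Longrightarrow> 4 * (x - y) \<le> 4 * c" by simp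

context msol
begin

lemma cD: "continuous_on {0..T} D"
proof -
  have "continuous_on {0..T} (\<lambda>t. integral (cbox 0 L) (dd t))"
    by (rule integral_continuous_on_param) (use cdd in \<open>simp add: box_real\<close>)
  then show ?thesis unfolding D_def by (simp add: box_real)
qed

lemma Dint: "integral {0..T} D \<le> BDF L T a \<kappa> l"
proof -
  have hG: "((\<lambda>t. - es.G t) has_integral es.F T - es.F 0) {0..T}" by (rule es.FTC_sub) (use T in auto)
  have hG': "(es.G has_integral es.F 0 - es.F T) {0..T}" using has_integral_neg[OF hG] by simp
  have iD: "D integrable_on {0..T}" by (rule integrable_continuous_real[OF cD])
  define K1 where "K1 = K1F L a \<kappa> l"
  have hR: "((\<lambda>t. 4 * es.G t + 4 * K1) has_integral 4 * (es.F 0 - es.F T) + 4 * K1 * T) {0..T}"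
    using has_integral_add[OF has_integral_mult_right[OF hG', of 4] has_integral_const_real[of "4 * K1" 0 T]] T
    by (simp add: algebra_simps)
  have "integral {0..T} D \<le> integral {0..T} (\<lambda>t. 4 * es.G t + 4 * K1)"
    by (rule integral_le[OF iD]) (use hR Gbound K1_def in \<open>auto simp: field_simps\<close>)
  also have "\<dots> = 4 * (es.F 0 - es.F T) + 4 * K1 * T" using hR by (rule integral_unique)
  finally have i1: "integral {0..T} D \<le> 4 * (es.F 0 - es.F T) + 4 * K1 * T" .
  have bb0: "0 < be * (1 - be)" using be by simp
  have F0: "es.F 0 \<le> 0"
  proof -
    have "es.F 0 \<le> integral {0..L} (\<lambda>x. 0::real)" unfolding es.F_def
    proof (rule integral_le)
      show "(\<lambda>x. hh (\<rho>1 0 x + \<rho>2 0 x)) integrable_on {0..L}"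
        by (rule integrable_continuous_real, rule cont_slice[OF es.cPu]) (use T in auto)
      fix x assume "x \<in> {0..L}"
      show "hh (\<rho>1 0 x + \<rho>2 0 x) \<le> 0" unfolding hh_def using bb0 by simp
    qed (rule integrable_0)
    then show ?thesis by simp
  qed
  have FT: "- ((L + 2) / (be * (1 - be))) \<le> es.F T"
  proof -
    have tT: "T \<in> {0..T}" using T by simp
    have hs: "((\<lambda>x. - (1 + (\<rho>1 T x + \<rho>2 T x)) / (be * (1 - be))) has_integral - (L + 2) / (be * (1 - be))) {0..L}"
      using has_integral_mult_left[OF has_integral_neg[OF sgi[OF tT]], of "1 / (be * (1 - be))"] by simp
    have "integral {0..L} (\<lambda>x. - (1 + (\<rho>1 T x + \<rho>2 T x)) / (be * (1 - be))) \<le> es.F T" unfolding es.F_def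
    proof (rule integral_le)
      show "(\<lambda>x. hh (\<rho>1 T x + \<rho>2 T x)) integrable_on {0..L}"
        by (rule integrable_continuous_real, rule cont_slice[OF es.cPu tT])
      show "(\<lambda>x. - (1 + (\<rho>1 T x + \<rho>2 T x)) / (be * (1 - be))) integrable_on {0..L}" using hs by blast
      fix x assume x: "x \<in> {0..L}"
      have sp: "0 < \<rho>1 T x + \<rho>2 T x" by (rule pos[OF tT x])
      have "(\<rho>1 T x + \<rho>2 T x) powr be \<le> (1 + (\<rho>1 T x + \<rho>2 T x)) powr be"
        by (rule powr_mono2) (use sp be in auto)
      also have "\<dots> \<le> (1 + (\<rho>1 T x + \<rho>2 T x)) powr 1" by (rule powr_mono) (use sp be in auto)
      also have "\<dots> = 1 + (\<rho>1 T x + \<rho>2 T x)" using sp by simp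
      finally have "(\<rho>1 T x + \<rho>2 T x) powr be \<le> 1 + (\<rho>1 T x + \<rho>2 T x)" .
      then have "- (1 + (\<rho>1 T x + \<rho>2 T x)) / (be * (1 - be)) \<le> - ((\<rho>1 T x + \<rho>2 T x) powr be) / (be * (1 - be))"
        by (intro divide_right_mono) (use bb0 in auto)
      then show "- (1 + (\<rho>1 T x + \<rho>2 T x)) / (be * (1 - be)) \<le> hh (\<rho>1 T x + \<rho>2 T x)"
        unfolding hh_def by simp
    qed
    then have "- (L + 2) / (be * (1 - be)) \<le> es.F T" unfolding integral_unique[OF hs] .
    moreover have "- (L + 2) / (be * (1 - be)) = - ((L + 2) / (be * (1 - be)))" by (simp only: minus_divide_left)
    ultimately show ?thesis by linarith
  qed
  have x1: "4 * (es.F 0 - es.F T) \<le> 4 * ((L + 2) / (be * (1 - be)))" by (rule lin1[OF F0 FT])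
  have x2: "4 * ((L + 2) / (be * (1 - be))) = 4 * (L + 2) / (be * (1 - be))" by simp
  show ?thesis using i1 x1 x2 unfolding BDF_def K1_def by linarith
qed

lemma final_abs:
  "integral ({0..T}\<times>{0..L}) (\<lambda>(t,x). \<bar>\<rho>1x t x + \<rho>2x t x\<bar> powr ((1 + a + be) / 2)) \<le> BF L T a \<kappa> l"
proof -
  define th where "th = (1 + a + be) / 2"
  have th0: "0 < th" unfolding th_def using a be by simp
  define C2 where "C2 = C2F L \<kappa>"
  define Q where "Q = (\<lambda>(t,x). \<bar>\<rho>1x t x + \<rho>2x t x\<bar> powr th)"
  have cQ: "continuous_on ({0..T}\<times>{0..L}) Q"
  proof -
    have "continuous_on ({0..T}\<times>{0..L}) (\<lambda>z. \<bar>(\<lambda>(t,x). \<rho>1x t x + \<rho>2x t x) z\<bar> powr th)"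
      by (intro continuous_on_powr' continuous_on_rabs csgx continuous_on_const) (use th0 in auto)
    then show ?thesis unfolding Q_def by (simp add: case_prod_beta)
  qed
  have per_t: "integral {0..L} (\<lambda>x. Q (t, x)) \<le> \<kappa> * D t + C2\<^sup>2 * (L + 2) * (D t + 1)" if t: "t \<in> {0..T}" for t
  proof -
    have hr: "((\<lambda>x. \<kappa> * dd t x + (C2\<^sup>2 * (D t + 1)) * (1 + (\<rho>1 t x + \<rho>2 t x))) has_integral
        \<kappa> * D t + (C2\<^sup>2 * (D t + 1)) * (L + 2)) {0..L}"
      by (intro has_integral_add has_integral_mult_right ddi[OF t] sgi[OF t])
    have "integral {0..L} (\<lambda>x. Q (t, x)) \<le> integral {0..L} (\<lambda>x. \<kappa> * dd t x + (C2\<^sup>2 * (D t + 1)) * (1 + (\<rho>1 t x + \<rho>2 t x)))"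
    proof (rule integral_le)
      show "(\<lambda>x. Q (t, x)) integrable_on {0..L}"
        by (rule integrable_continuous_real) (use cont_slice[OF cQ[unfolded Q_def] t] in \<open>simp add: Q_def\<close>)
      show "(\<lambda>x. \<kappa> * dd t x + (C2\<^sup>2 * (D t + 1)) * (1 + (\<rho>1 t x + \<rho>2 t x))) integrable_on {0..L}"
        using hr by blast
      fix x assume x: "x \<in> {0..L}"
      define s where "s = \<rho>1 t x + \<rho>2 t x"
      define p where "p = \<rho>1x t x + \<rho>2x t x"
      have sp: "0 < s" unfolding s_def by (rule pos[OF t x])
      have v: "0 < f2 s" by (rule f2pos[OF sp])
      have p3: "\<bar>p\<bar> powr ((1 + a + be) / 2) \<le> \<kappa> * (s powr (be - 1) * f2 s * p\<^sup>2) + (1 + s) powr (1 + a + be)"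
        by (rule pw3[OF sp v f2lb[OF sp] a k be(1) be(2) be(3)])
      have "(1 + s) powr (1 + a + be) = (1 + s) powr (1 + (a + be))" by (simp add: add.assoc)
      also have "\<dots> = (1 + s) powr 1 * (1 + s) powr (a + be)" by (rule powr_add)
      also have "\<dots> \<le> (1 + s) * (C2\<^sup>2 * (D t + 1))"
        using mult_left_mono[OF supb[OF t x], of "1 + s"] sp unfolding s_def C2_def by simp
      finally have q: "(1 + s) powr (1 + a + be) \<le> (1 + s) * (C2\<^sup>2 * (D t + 1))" .
      show "Q (t, x) \<le> \<kappa> * dd t x + (C2\<^sup>2 * (D t + 1)) * (1 + (\<rho>1 t x + \<rho>2 t x))"
        using p3 q unfolding Q_def th_def dd_def s_def p_def by (simp add: algebra_simps)
    qed
    also have "\<dots> = \<kappa> * D t + (C2\<^sup>2 * (D t + 1)) * (L + 2)" using hr by (rule integral_unique)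
    finally show ?thesis by (simp add: algebra_simps)
  qed
  have eqI: "integral ({0..T}\<times>{0..L}) Q = integral {0..T} (\<lambda>t. integral {0..L} (\<lambda>x. Q (t, x)))"
  proof -
    have "integral (cbox (0,0) (T,L)) Q = integral (cbox 0 T) (\<lambda>t. integral (cbox 0 L) (\<lambda>x. Q (t, x)))"
      by (rule integral_prod_continuous) (use cQ in \<open>simp add: cbox_Pair_eq box_real\<close>)
    then show ?thesis by (simp add: cbox_Pair_eq box_real)
  qed
  have cI: "continuous_on {0..T} (\<lambda>t. integral {0..L} (\<lambda>x. Q (t, x)))"
  proof -
    have "continuous_on {0..T} (\<lambda>t. integral (cbox 0 L) (\<lambda>x. Q (t, x)))"
      by (rule integral_continuous_on_param) (use cQ in \<open>simp add: box_real case_prod_beta\<close>)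
    then show ?thesis by (simp add: box_real)
  qed
  define A where "A = \<kappa> + C2\<^sup>2 * (L + 2)"
  have A0: "0 \<le> A" unfolding A_def using k L by simp
  have hD: "(D has_integral integral {0..T} D) {0..T}" by (rule integrable_integral, rule integrable_continuous_real[OF cD])
  have hR: "((\<lambda>t. A * D t + C2\<^sup>2 * (L + 2)) has_integral A * integral {0..T} D + C2\<^sup>2 * (L + 2) * T) {0..T}"
    using has_integral_add[OF has_integral_mult_right[OF hD, of A] has_integral_const_real[of "C2\<^sup>2 * (L + 2)" 0 T]] T
    by (simp add: algebra_simps)
  have "integral {0..T} (\<lambda>t. integral {0..L} (\<lambda>x. Q (t, x))) \<le> integral {0..T} (\<lambda>t. A * D t + C2\<^sup>2 * (L + 2))"
  proof (rule integral_le)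
    show "(\<lambda>t. integral {0..L} (\<lambda>x. Q (t, x))) integrable_on {0..T}" by (rule integrable_continuous_real[OF cI])
    show "(\<lambda>t. A * D t + C2\<^sup>2 * (L + 2)) integrable_on {0..T}" using hR by blast
    fix t assume t: "t \<in> {0..T}"
    show "integral {0..L} (\<lambda>x. Q (t, x)) \<le> A * D t + C2\<^sup>2 * (L + 2)"
      using per_t[OF t] unfolding A_def by (simp add: algebra_simps)
  qed
  also have "\<dots> = A * integral {0..T} D + C2\<^sup>2 * (L + 2) * T" using hR by (rule integral_unique)
  also have "\<dots> \<le> A * BDF L T a \<kappa> l + C2\<^sup>2 * (L + 2) * T"
    using mult_left_mono[OF Dint A0] by simp
  also have "\<dots> = BF L T a \<kappa> l" unfolding A_def BF_def C2_def by simp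
  finally show ?thesis using eqI unfolding Q_def th_def by simp
qed

end


lemma init_int:
  assumes L: "0 < L" and r: "init_ok L r"
  shows "integral {0..L} r = 1" "continuous_on {0..L} r" "\<And>x. x \<in> {0..L} \<Longrightarrow> 0 \<le> r x"
proof -
  have C: "C31_on L r" using r unfolding init_ok_def by simp
  have d0: "r differentiable (at x within {0..L})" if "x \<in> {0..L}" for x
  proof -
    have "\<forall>j<3. \<forall>x\<in>{0..L}. ((dxL L ^^ j) r) differentiable (at x within {0..L})"
      using C unfolding C31_on_def by blast
    then show ?thesis using that by (metis funpow_0 zero_less_numeral)
  qed
  show cr: "continuous_on {0..L} r"
    using d0 differentiable_imp_continuous_within continuous_on_eq_continuous_within by blast
  have si: "set_integrable lborel {0..L} r"
    unfolding set_integrable_def by (rule borel_integrable_compact[OF compact_Icc cr])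
  have "(LINT x:{0..L}|lborel. r x) = 1" using r unfolding init_ok_def by simp
  then show "integral {0..L} r = 1" using set_borel_integral_eq_integral(2)[OF si] by simp
  show "\<And>x. x \<in> {0..L} \<Longrightarrow> 0 \<le> r x" using r unfolding init_ok_def by simp
qed

lemma sol_reg_facts:
  assumes L: "0 < L" and T: "0 < T" and S: "sol_regular L T u"
  shows "continuous_on ({0..T}\<times>{0..L}) (\<lambda>(t,x). u t x)"
    "continuous_on ({0..T}\<times>{0..L}) (\<lambda>(t,x). dxL L (u t) x)"
    "continuous_on ({0..T}\<times>{0..L}) (\<lambda>(t,x). dtT T u t x)"
    "\<And>t x. t \<in> {0..T} \<Longrightarrow> x \<in> {0..L} \<Longrightarrow> (u t has_real_derivative dxL L (u t) x) (at x within {0..L})"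
    "\<And>t x. t \<in> {0..T} \<Longrightarrow> x \<in> {0..L} \<Longrightarrow> ((\<lambda>s. u s x) has_real_derivative dtT T u t x) (at t within {0..T})"
proof -
  have R1: "\<forall>t\<in>{0..T}. \<forall>j<3. \<forall>x\<in>{0..L}. ((dxL L ^^ j) (u t)) differentiable (at x within {0..L})"
    and R2: "\<forall>j\<le>3. continuous_on ({0..T} \<times> {0..L}) (\<lambda>(t,x). (dxL L ^^ j) (u t) x)"
    and R3: "\<forall>x\<in>{0..L}. \<forall>t\<in>{0..T}. (\<lambda>s. u s x) differentiable (at t within {0..T})"
    and R5: "continuous_on ({0..T} \<times> {0..L}) (\<lambda>(t,x). dtT T u t x)"
    using S unfolding sol_regular_def by blast+
  show "continuous_on ({0..T}\<times>{0..L}) (\<lambda>(t,x). u t x)" using R2[rule_format, of 0] by simp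
  show "continuous_on ({0..T}\<times>{0..L}) (\<lambda>(t,x). dxL L (u t) x)" using R2[rule_format, of 1] by simp
  show "continuous_on ({0..T}\<times>{0..L}) (\<lambda>(t,x). dtT T u t x)" by (rule R5)
  fix t x assume t: "t \<in> {0..T}" and x: "x \<in> {0..L}"
  show "(u t has_real_derivative dxL L (u t) x) (at x within {0..L})"
    by (rule dxL_hasd[OF L x]) (use R1[rule_format, OF t, of 0 x] x in simp)
  show "((\<lambda>s. u s x) has_real_derivative dtT T u t x) (at t within {0..T})"
    by (rule dtT_hasd[OF T t]) (use R3 t x in blast)
qed

lemma to_msol:
  assumes L: "0 < L" and T: "0 < T" and Hf: "hyp1 f \<alpha> \<kappa> \<or> hyp2 L f \<alpha> \<kappa>" and eta: "0 < \<eta>"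
    and V1: "potential_ok L V1" and V2: "potential_ok L V2"
    and lip1: "lip_const L V1 = l1" and lip2: "lip_const L V2 = l2"
    and i1: "init_ok L r10" and i2: "init_ok L r20"
    and cs: "classical_solution L T f \<eta> V1 V2 r10 r20 \<rho>1 \<rho>2"
  shows "msol L T \<alpha> \<kappa> (\<bar>l1\<bar> + \<bar>l2\<bar>) \<eta> ((deriv ^^ 2) f) (dxL L V1) (dxL L V2) \<rho>1 \<rho>2
    (\<lambda>t. dxL L (\<rho>1 t)) (\<lambda>t. dxL L (\<rho>2 t)) (dtT T \<rho>1) (dtT T \<rho>2)"
proof -
  have sr1: "sol_regular L T \<rho>1" and sr2: "sol_regular L T \<rho>2"
    and pos: "\<And>t x. t \<in> {0..T} \<Longrightarrow> x \<in> {0..L} \<Longrightarrow> 0 < \<rho>1 t x + \<rho>2 t x"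
    and ini: "\<And>x. x \<in> {0..L} \<Longrightarrow> \<rho>1 0 x = r10 x \<and> \<rho>2 0 x = r20 x"
    and pde: "\<And>t x. t \<in> {0<..<T} \<Longrightarrow> x \<in> {0<..<L} \<Longrightarrow>
            flux L f \<eta> V1 (\<rho>1 t) (\<lambda>x. \<rho>1 t x + \<rho>2 t x) differentiable (at x) \<and>
            dtT T \<rho>1 t x = dxL L (flux L f \<eta> V1 (\<rho>1 t) (\<lambda>x. \<rho>1 t x + \<rho>2 t x)) x \<and>
            flux L f \<eta> V2 (\<rho>2 t) (\<lambda>x. \<rho>1 t x + \<rho>2 t x) differentiable (at x) \<and>
            dtT T \<rho>2 t x = dxL L (flux L f \<eta> V2 (\<rho>2 t) (\<lambda>x. \<rho>1 t x + \<rho>2 t x)) x"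
    and bd: "\<And>t. t \<in> {0<..<T} \<Longrightarrow>
            flux L f \<eta> V1 (\<rho>1 t) (\<lambda>x. \<rho>1 t x + \<rho>2 t x) 0 = 0 \<and>
            flux L f \<eta> V1 (\<rho>1 t) (\<lambda>x. \<rho>1 t x + \<rho>2 t x) L = 0 \<and>
            flux L f \<eta> V2 (\<rho>2 t) (\<lambda>x. \<rho>1 t x + \<rho>2 t x) 0 = 0 \<and>
            flux L f \<eta> V2 (\<rho>2 t) (\<lambda>x. \<rho>1 t x + \<rho>2 t x) L = 0"
    using cs unfolding classical_solution_def Let_def by auto
  note F1 = sol_reg_facts[OF L T sr1] and F2 = sol_reg_facts[OF L T sr2]
  note fp = f_props[OF Hf]
  note P1 = pot_props[OF L V1] and P2 = pot_props[OF L V2]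
  have chain: "((\<lambda>y. deriv f (\<rho>1 t y + \<rho>2 t y) + V y) has_real_derivative
        (deriv ^^ 2) f (\<rho>1 t y + \<rho>2 t y) * (dxL L (\<rho>1 t) y + dxL L (\<rho>2 t) y) + dxL L V y) (at y within {0..L})"
    if t: "t \<in> {0..T}" and y: "y \<in> {0..L}" and V: "potential_ok L V" for t y V
  proof -
    have ds: "((\<lambda>y. \<rho>1 t y + \<rho>2 t y) has_real_derivative dxL L (\<rho>1 t) y + dxL L (\<rho>2 t) y) (at y within {0..L})"
      by (rule DERIV_add[OF F1(4)[OF t y] F2(4)[OF t y]])
    have df: "(deriv f has_real_derivative (deriv ^^ 2) f (\<rho>1 t y + \<rho>2 t y)) (at (\<rho>1 t y + \<rho>2 t y))"
      by (rule fp(4)[OF pos[OF t y]])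
    show ?thesis by (rule DERIV_add[OF DERIV_chain2[OF df ds] pot_props(1)[OF L V y]])
  qed
  have fluxeq: "flux L f \<eta> V (\<rho> t) (\<lambda>x. \<rho>1 t x + \<rho>2 t x) y =
      \<eta> * dxL L (\<rho> t) y + \<rho> t y * ((deriv ^^ 2) f (\<rho>1 t y + \<rho>2 t y) * (dxL L (\<rho>1 t) y + dxL L (\<rho>2 t) y) + dxL L V y)"
    if t: "t \<in> {0..T}" and y: "y \<in> {0..L}" and V: "potential_ok L V" for t y V \<rho>
    unfolding flux_def using dxL_eq[OF L y chain[OF t y V]] by simp
  show ?thesis
  proof (unfold_locales)
    show "0 < L" "0 < T" by (fact L, fact T)
    show "0 < \<alpha>" "\<alpha> < 1" "0 < \<kappa>" by (fact fp(1), fact fp(2), fact fp(3))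
    show "0 \<le> \<bar>l1\<bar> + \<bar>l2\<bar>" by simp
    show "0 < \<eta>" by (fact eta)
    show "continuous_on {0<..} ((deriv ^^ 2) f)" by (fact fp(5))
    show "\<And>s. 0 < s \<Longrightarrow> min (s powr \<alpha>) s / \<kappa> \<le> s\<^sup>2 * (deriv ^^ 2) f s" by (fact fp(6))
    show "continuous_on ({0..T}\<times>{0..L}) (\<lambda>(t,x). \<rho>1 t x)" by (fact F1(1))
    show "continuous_on ({0..T}\<times>{0..L}) (\<lambda>(t,x). dxL L (\<rho>1 t) x)" by (fact F1(2))
    show "continuous_on ({0..T}\<times>{0..L}) (\<lambda>(t,x). dtT T \<rho>1 t x)" by (fact F1(3))
    show "continuous_on ({0..T}\<times>{0..L}) (\<lambda>(t,x). \<rho>2 t x)" by (fact F2(1))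
    show "continuous_on ({0..T}\<times>{0..L}) (\<lambda>(t,x). dxL L (\<rho>2 t) x)" by (fact F2(2))
    show "continuous_on ({0..T}\<times>{0..L}) (\<lambda>(t,x). dtT T \<rho>2 t x)" by (fact F2(3))
    show "\<And>t x. t \<in> {0..T} \<Longrightarrow> x \<in> {0..L} \<Longrightarrow> (\<rho>1 t has_real_derivative dxL L (\<rho>1 t) x) (at x within {0..L})"
      by (fact F1(4))
    show "\<And>t x. t \<in> {0..T} \<Longrightarrow> x \<in> {0..L} \<Longrightarrow> (\<rho>2 t has_real_derivative dxL L (\<rho>2 t) x) (at x within {0..L})"
      by (fact F2(4))
    show "\<And>t x. t \<in> {0..T} \<Longrightarrow> x \<in> {0..L} \<Longrightarrow> ((\<lambda>s. \<rho>1 s x) has_real_derivative dtT T \<rho>1 t x) (at t within {0..T})"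
      by (fact F1(5))
    show "\<And>t x. t \<in> {0..T} \<Longrightarrow> x \<in> {0..L} \<Longrightarrow> ((\<lambda>s. \<rho>2 s x) has_real_derivative dtT T \<rho>2 t x) (at t within {0..T})"
      by (fact F2(5))
    show "continuous_on {0..L} (dxL L V1)" by (fact P1(2))
    show "continuous_on {0..L} (dxL L V2)" by (fact P2(2))
    show "\<And>x. x \<in> {0..L} \<Longrightarrow> \<bar>dxL L V1 x\<bar> \<le> \<bar>l1\<bar> + \<bar>l2\<bar>"
      using P1(4) lip1 by fastforce
    show "\<And>x. x \<in> {0..L} \<Longrightarrow> \<bar>dxL L V2 x\<bar> \<le> \<bar>l1\<bar> + \<bar>l2\<bar>"
      using P2(4) lip2 by fastforce
    show "\<And>t x. t \<in> {0..T} \<Longrightarrow> x \<in> {0..L} \<Longrightarrow> 0 < \<rho>1 t x + \<rho>2 t x" by (fact pos)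
    show "\<And>x. x \<in> {0..L} \<Longrightarrow> 0 \<le> \<rho>1 0 x" using ini init_int(3)[OF L i1] by simp
    show "\<And>x. x \<in> {0..L} \<Longrightarrow> 0 \<le> \<rho>2 0 x" using ini init_int(3)[OF L i2] by simp
    show "integral {0..L} (\<lambda>x. \<rho>1 0 x + \<rho>2 0 x) = 2"
    proof -
      have "integral {0..L} (\<lambda>x. \<rho>1 0 x + \<rho>2 0 x) = integral {0..L} (\<lambda>x. r10 x + r20 x)"
        by (rule integral_cong) (use ini in simp)
      also have "\<dots> = integral {0..L} r10 + integral {0..L} r20"
        by (rule integral_add) (use init_int(2)[OF L i1] init_int(2)[OF L i2] in \<open>auto intro: integrable_continuous_real\<close>)
      finally show ?thesis using init_int(1)[OF L i1] init_int(1)[OF L i2] by simp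
    qed
  next
    fix t x assume t: "t \<in> {0<..<T}" and x: "x \<in> {0<..<L}"
    have t': "t \<in> {0..T}" using t by auto
    show "((\<lambda>x. \<eta> * dxL L (\<rho>1 t) x + \<rho>1 t x * ((deriv ^^ 2) f (\<rho>1 t x + \<rho>2 t x) *
        (dxL L (\<rho>1 t) x + dxL L (\<rho>2 t) x) + dxL L V1 x)) has_real_derivative dtT T \<rho>1 t x) (at x)"
    proof (rule has_field_derivative_transform_within_open[of _ _ _ "{0<..<L}"])
      show "(flux L f \<eta> V1 (\<rho>1 t) (\<lambda>x. \<rho>1 t x + \<rho>2 t x) has_real_derivative dtT T \<rho>1 t x) (at x)"
        using dxL_at[OF x, of "flux L f \<eta> V1 (\<rho>1 t) (\<lambda>x. \<rho>1 t x + \<rho>2 t x)"] pde[OF t x] by simp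
    qed (use x fluxeq[OF t' _ V1] in auto)
    show "((\<lambda>x. \<eta> * dxL L (\<rho>2 t) x + \<rho>2 t x * ((deriv ^^ 2) f (\<rho>1 t x + \<rho>2 t x) *
        (dxL L (\<rho>1 t) x + dxL L (\<rho>2 t) x) + dxL L V2 x)) has_real_derivative dtT T \<rho>2 t x) (at x)"
    proof (rule has_field_derivative_transform_within_open[of _ _ _ "{0<..<L}"])
      show "(flux L f \<eta> V2 (\<rho>2 t) (\<lambda>x. \<rho>1 t x + \<rho>2 t x) has_real_derivative dtT T \<rho>2 t x) (at x)"
        using dxL_at[OF x, of "flux L f \<eta> V2 (\<rho>2 t) (\<lambda>x. \<rho>1 t x + \<rho>2 t x)"] pde[OF t x] by simp
    qed (use x fluxeq[OF t' _ V2] in auto)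
  next
    fix t assume t: "t \<in> {0<..<T}"
    have t': "t \<in> {0..T}" using t by auto
    have z: "(0::real) \<in> {0..L}" "L \<in> {0..L}" using L by auto
    show "\<eta> * dxL L (\<rho>1 t) 0 + \<rho>1 t 0 * ((deriv ^^ 2) f (\<rho>1 t 0 + \<rho>2 t 0) * (dxL L (\<rho>1 t) 0 + dxL L (\<rho>2 t) 0) + dxL L V1 0) = 0 \<and>
          \<eta> * dxL L (\<rho>1 t) L + \<rho>1 t L * ((deriv ^^ 2) f (\<rho>1 t L + \<rho>2 t L) * (dxL L (\<rho>1 t) L + dxL L (\<rho>2 t) L) + dxL L V1 L) = 0"
      using bd[OF t] fluxeq[OF t' z(1) V1, of \<rho>1] fluxeq[OF t' z(2) V1, of \<rho>1] by simp
    show "\<eta> * dxL L (\<rho>2 t) 0 + \<rho>2 t 0 * ((deriv ^^ 2) f (\<rho>1 t 0 + \<rho>2 t 0) * (dxL L (\<rho>1 t) 0 + dxL L (\<rho>2 t) 0) + dxL L V2 0) = 0 \<and>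
          \<eta> * dxL L (\<rho>2 t) L + \<rho>2 t L * ((deriv ^^ 2) f (\<rho>1 t L + \<rho>2 t L) * (dxL L (\<rho>1 t) L + dxL L (\<rho>2 t) L) + dxL L V2 L) = 0"
      using bd[OF t] fluxeq[OF t' z(1) V2, of \<rho>2] fluxeq[OF t' z(2) V2, of \<rho>2] by simp
  qed
qed

lemma main_bound:
  assumes L: "0 < L" and T: "0 < T" and Hf: "hyp1 f \<alpha> \<kappa> \<or> hyp2 L f \<alpha> \<kappa>" and eta: "0 < \<eta>"
    and V1: "potential_ok L V1" and V2: "potential_ok L V2"
    and lip1: "lip_const L V1 = l1" and lip2: "lip_const L V2 = l2"
    and i1: "init_ok L r10" and i2: "init_ok L r20"
    and cs: "classical_solution L T f \<eta> V1 V2 r10 r20 \<rho>1 \<rho>2"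
  shows "(LINT z:{0..T} \<times> {0..L}|lborel.
           \<bar>dxL L (\<lambda>y. \<rho>1 (fst z) y + \<rho>2 (fst z) y) (snd z)\<bar> powr ((1 + \<alpha> + beF \<alpha>) / 2)) powr (1 / ((1 + \<alpha> + beF \<alpha>) / 2))
     \<le> BF L T \<alpha> \<kappa> (\<bar>l1\<bar> + \<bar>l2\<bar>) powr (1 / ((1 + \<alpha> + beF \<alpha>) / 2))"
proof -
  interpret msol L T \<alpha> \<kappa> "\<bar>l1\<bar> + \<bar>l2\<bar>" \<eta> "(deriv ^^ 2) f" "dxL L V1" "dxL L V2" \<rho>1 \<rho>2
    "\<lambda>t. dxL L (\<rho>1 t)" "\<lambda>t. dxL L (\<rho>2 t)" "dtT T \<rho>1" "dtT T \<rho>2"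
    by (rule to_msol[OF L T Hf eta V1 V2 lip1 lip2 i1 i2 cs])
  define th where "th = (1 + \<alpha> + beF \<alpha>) / 2"
  have th0: "0 < th" unfolding th_def using a be by simp
  define R where "R = {0..T} \<times> {0..L}"
  define Q where "Q = (\<lambda>z. \<bar>dxL L (\<lambda>y. \<rho>1 (fst z) y + \<rho>2 (fst z) y) (snd z)\<bar> powr th)"
  define Q' where "Q' = (\<lambda>(t,x). \<bar>dxL L (\<rho>1 t) x + dxL L (\<rho>2 t) x\<bar> powr th)"
  have eqQ: "Q z = Q' z" if z: "z \<in> R" for z
  proof -
    obtain t x where zz: "z = (t, x)" and t: "t \<in> {0..T}" and x: "x \<in> {0..L}" using z unfolding R_def by auto
    have "dxL L (\<lambda>y. \<rho>1 t y + \<rho>2 t y) x = dxL L (\<rho>1 t) x + dxL L (\<rho>2 t) x"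
      by (rule dxL_eq[OF L x DERIV_add[OF d1x[OF t x] d2x[OF t x]]])
    then show ?thesis unfolding Q_def Q'_def zz by simp
  qed
  have cQ': "continuous_on R Q'"
  proof -
    have "continuous_on R (\<lambda>z. \<bar>(\<lambda>(t,x). dxL L (\<rho>1 t) x + dxL L (\<rho>2 t) x) z\<bar> powr th)"
      unfolding R_def by (intro continuous_on_powr' continuous_on_rabs csgx continuous_on_const) (use th0 in auto)
    then show ?thesis unfolding Q'_def by (simp add: case_prod_beta)
  qed
  have cR: "compact R" unfolding R_def by (intro compact_Times compact_Icc)
  have si: "set_integrable lborel R Q'"
    unfolding set_integrable_def by (rule borel_integrable_compact[OF cR cQ'])
  have "(LINT z:R|lborel. Q z) = (LINT z:R|lborel. Q' z)"
  proof -
    have "(\<lambda>z. indicator R z *\<^sub>R Q z) = (\<lambda>z. indicator R z *\<^sub>R Q' z)"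
      by (rule ext) (simp add: eqQ split: split_indicator)
    then show ?thesis unfolding set_lebesgue_integral_def by simp
  qed
  also have "\<dots> = integral R Q'" by (rule set_borel_integral_eq_integral(2)[OF si])
  finally have e1: "(LINT z:R|lborel. Q z) = integral R Q'" .
  have le: "integral R Q' \<le> BF L T \<alpha> \<kappa> (\<bar>l1\<bar> + \<bar>l2\<bar>)"
    using final_abs unfolding Q'_def R_def th_def by simp
  have ge: "0 \<le> integral R Q'"
    by (rule integral_nonneg[OF set_borel_integral_eq_integral(1)[OF si]]) (simp add: Q'_def case_prod_beta)
  have "(integral R Q') powr (1 / th) \<le> BF L T \<alpha> \<kappa> (\<bar>l1\<bar> + \<bar>l2\<bar>) powr (1 / th)"
    by (rule powr_mono2[OF _ ge le]) (use th0 in simp)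
  then show ?thesis using e1 unfolding Q_def R_def th_def by simp
qed

theorem proposition6p1:
  fixes \<alpha> \<kappa> L T l1 l2 :: real
  assumes "0 < L" and "0 < T"
  shows "\<exists>K5 \<theta>. 0 < K5 \<and> 1 < \<theta> \<and>
    (\<forall>f \<eta> V1 V2 r10 r20 \<rho>1 \<rho>2.
       (hyp1 f \<alpha> \<kappa> \<or> hyp2 L f \<alpha> \<kappa>) \<longrightarrow>
       0 < \<eta> \<longrightarrow> \<eta> \<le> 1 \<longrightarrow>
       potential_ok L V1 \<longrightarrow> potential_ok L V2 \<longrightarrow>
       lip_const L V1 = l1 \<longrightarrow> lip_const L V2 = l2 \<longrightarrow>
       init_ok L r10 \<longrightarrow> init_ok L r20 \<longrightarrow>
       (\<forall>x\<in>{0..L}. 0 < r10 x + r20 x) \<longrightarrow>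
       compat L f \<eta> V1 V2 r10 r20 \<longrightarrow>
       classical_solution L T f \<eta> V1 V2 r10 r20 \<rho>1 \<rho>2 \<longrightarrow>
       (LINT z:{0..T} \<times> {0..L}|lborel.
           \<bar>dxL L (\<lambda>y. \<rho>1 (fst z) y + \<rho>2 (fst z) y) (snd z)\<bar> powr \<theta>) powr (1 / \<theta>) \<le> K5)"
proof (cases "0 < \<alpha> \<and> \<alpha> < 1")
  case False
  have key: "\<And>f. hyp1 f \<alpha> \<kappa> \<or> hyp2 L f \<alpha> \<kappa> \<Longrightarrow> False"
    using f_props(1,2) False by blast
  show ?thesis by (rule exI[of _ 1], rule exI[of _ 2]) (use key in auto)
next
  case True
  define th where "th = (1 + \<alpha> + beF \<alpha>) / 2"
  have th1: "1 < th" unfolding th_def using beF_props(3)[of \<alpha>] True by simp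
  define K where "K = BF L T \<alpha> \<kappa> (\<bar>l1\<bar> + \<bar>l2\<bar>) powr (1 / th) + 1"
  have K0: "0 < K" unfolding K_def by (simp add: add_nonneg_pos)
  show ?thesis
  proof (rule exI[of _ K], rule exI[of _ th], intro conjI allI impI)
    show "0 < K" by (fact K0)
    show "1 < th" by (fact th1)
    fix f \<eta> V1 V2 r10 r20 \<rho>1 \<rho>2
    assume Hf: "hyp1 f \<alpha> \<kappa> \<or> hyp2 L f \<alpha> \<kappa>" and eta: "0 < \<eta>" and "\<eta> \<le> 1"
      and V1: "potential_ok L V1" and V2: "potential_ok L V2"
      and lip1: "lip_const L V1 = l1" and lip2: "lip_const L V2 = l2"
      and i1: "init_ok L r10" and i2: "init_ok L r20"
      and "\<forall>x\<in>{0..L}. 0 < r10 x + r20 x" and "compat L f \<eta> V1 V2 r10 r20"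
      and cs: "classical_solution L T f \<eta> V1 V2 r10 r20 \<rho>1 \<rho>2"
    have "(LINT z:{0..T} \<times> {0..L}|lborel.
           \<bar>dxL L (\<lambda>y. \<rho>1 (fst z) y + \<rho>2 (fst z) y) (snd z)\<bar> powr th) powr (1 / th)
       \<le> BF L T \<alpha> \<kappa> (\<bar>l1\<bar> + \<bar>l2\<bar>) powr (1 / th)"
      unfolding th_def by (rule main_bound[OF assms Hf eta V1 V2 lip1 lip2 i1 i2 cs])
    then show "(LINT z:{0..T} \<times> {0..L}|lborel.
           \<bar>dxL L (\<lambda>y. \<rho>1 (fst z) y + \<rho>2 (fst z) y) (snd z)\<bar> powr th) powr (1 / th) \<le> K"
      unfolding K_def by linarith
  qed
qed


end
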